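(* Let $E$ and $F$ be Banach lattices. The following assertions are equivalent: (1) Each positive Dunford–Pettis operator $T:E\to F$ is uaw-Dunford–Pettis. (2) Each positive compact operator $T:E\to F$ is uaw-Dunford–Pettis. (3) Either the norm of the dual Banach lattice $E'$ is order continuous, or $F=\{0\}$.
   Context: All operators are continuous linear operators. A net $(x_\alpha)$ in a Banach lattice $E$ is uaw-convergent to $x$ (written $x_\alpha\xrightarrow{uaw}x$) if $|x_\alpha-x|\wedge u\to 0$ weakly for every $u\in E_+$. An operator $T$ from a Banach lattice $E$ into a Banach space $X$ is uaw-Dunford–Pettis if for every norm bounded sequence $(x_n)$ in $E$ with $x_n\xrightarrow{uaw}0$ one has $\|Tx_n\|\to 0$. An operator between Banach spaces is Dunford–Pettis if it maps weakly null sequences to norm null sequences. *)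

theory Defs
  imports "HOL-Analysis.Analysis"
begin

definition labs :: "'a::{lattice, uminus} \<Rightarrow> 'a" where
  "labs x = sup x (- x)"

class banach_lattice = banach + ordered_real_vector + lattice +
  assumes lattice_norm: "sup x (- x) \<le> sup y (- y) \<Longrightarrow> norm x \<le> norm y"

definition dual_le :: "('a::banach_lattice \<Rightarrow>\<^sub>L real) \<Rightarrow> ('a \<Rightarrow>\<^sub>L real) \<Rightarrow> bool" where
  "dual_le f g \<longleftrightarrow> (\<forall>x. 0 \<le> x \<longrightarrow> blinfun_apply f x \<le> blinfun_apply g x)"

definition dual_order_continuous :: "'a::banach_lattice itself \<Rightarrow> bool" where
  "dual_order_continuous _ \<longleftrightarrow>
     (\<forall>D :: ('a \<Rightarrow>\<^sub>L real) set.
        D \<noteq> {}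
        \<and> (\<forall>f\<in>D. \<forall>g\<in>D. \<exists>h\<in>D. dual_le h f \<and> dual_le h g)
        \<and> (\<forall>f\<in>D. dual_le 0 f)
        \<and> (\<forall>h. (\<forall>f\<in>D. dual_le h f) \<longrightarrow> dual_le h 0)
        \<longrightarrow> (INF f\<in>D. norm f) = 0)"

definition weakly_null :: "(nat \<Rightarrow> 'a::real_normed_vector) \<Rightarrow> bool" where
  "weakly_null x \<longleftrightarrow> (\<forall>f :: 'a \<Rightarrow>\<^sub>L real. (\<lambda>n. blinfun_apply f (x n)) \<longlonglongrightarrow> 0)"

definition uaw_null :: "(nat \<Rightarrow> 'a::banach_lattice) \<Rightarrow> bool" where
  "uaw_null x \<longleftrightarrow> (\<forall>u. 0 \<le> u \<longrightarrow> weakly_null (\<lambda>n. inf (labs (x n)) u))"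

definition positive_op :: "('a::banach_lattice \<Rightarrow> 'b::banach_lattice) \<Rightarrow> bool" where
  "positive_op T \<longleftrightarrow> (\<forall>x. 0 \<le> x \<longrightarrow> 0 \<le> T x)"

definition dunford_pettis_op :: "('a::real_normed_vector \<Rightarrow> 'b::real_normed_vector) \<Rightarrow> bool" where
  "dunford_pettis_op T \<longleftrightarrow> bounded_linear T \<and>
     (\<forall>x. weakly_null x \<longrightarrow> (\<lambda>n. T (x n)) \<longlonglongrightarrow> 0)"

definition compact_op :: "('a::real_normed_vector \<Rightarrow> 'b::real_normed_vector) \<Rightarrow> bool" where
  "compact_op T \<longleftrightarrow> bounded_linear T \<and> compact (closure (T ` ball 0 1))"

definition uaw_dunford_pettis_op :: "('a::banach_lattice \<Rightarrow> 'b::real_normed_vector) \<Rightarrow> bool" where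
  "uaw_dunford_pettis_op T \<longleftrightarrow> bounded_linear T \<and>
     (\<forall>x. bounded (range x) \<and> uaw_null x \<longrightarrow> (\<lambda>n. T (x n)) \<longlonglongrightarrow> 0)"

end

theory Submission
  imports Defs "HOL-Library.Lattice_Algebras"
begin

subclass (in banach_lattice) lattice_ab_group_add ..

lemma (in lattice_ab_group_add) inf_sup_distrib_lg:
  "inf a (sup b c) = sup (inf a b) (inf a c)"
proof (rule order.antisym)
  show "sup (inf a b) (inf a c) \<le> inf a (sup b c)"
    by (simp add: inf.coboundedI2 le_infI1)
  have ie: "inf x y = x + y - sup x y" for x y
    using add_eq_inf_sup[of x y] by (metis add_diff_cancel_left' add.commute)
  have m1: "sup a b \<le> sup a (sup b c)" by (rule sup_mono) simp_all
  have m2: "sup a c \<le> sup a (sup b c)" by (rule sup_mono) simp_all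
  have "a + b - sup a (sup b c) \<le> a + b - sup a b"
    using m1 by (rule diff_left_mono)
  moreover have "a + c - sup a (sup b c) \<le> a + c - sup a c"
    using m2 by (rule diff_left_mono)
  ultimately have A: "sup (a + b - sup a (sup b c)) (a + c - sup a (sup b c)) \<le> sup (inf a b) (inf a c)"
    unfolding ie[of a b] ie[of a c] by (rule sup.mono)
  have B: "sup (a + b - sup a (sup b c)) (a + c - sup a (sup b c)) = a + sup b c - sup a (sup b c)"
    by (simp only: diff_conv_add_uminus add_sup_distrib_right add_sup_distrib_left add.assoc)
  show "inf a (sup b c) \<le> sup (inf a b) (inf a c)" using A unfolding B ie[of a "sup b c"] .
qed

subclass (in lattice_ab_group_add) distrib_lattice
proof
  fix x y z
  have "sup x (inf y z) = sup (sup x (inf x z)) (inf y z)" using sup_inf_absorb[of x z] by metis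
  also have "\<dots> = sup x (sup (inf z x) (inf z y))" by (metis sup_assoc inf_commute)
  also have "\<dots> = sup x (inf z (sup x y))" by (simp add: inf_sup_distrib_lg)
  also have "\<dots> = sup (inf (sup x y) x) (inf (sup x y) z)" by (simp add: inf_commute)
  also have "\<dots> = inf (sup x y) (sup x z)" by (simp add: inf_sup_distrib_lg)
  finally show "sup x (inf y z) = inf (sup x y) (sup x z)" .
qed


lemma labs_ge: "(x::'a::lattice_ab_group_add) \<le> labs x" "- (x::'a::lattice_ab_group_add) \<le> labs x"
  by (auto simp: labs_def)

lemma labs_nonneg: "0 \<le> labs (x::'a::lattice_ab_group_add)"
proof -
  have "x + - x \<le> labs x + labs x" by (rule add_mono) (auto simp: labs_def)
  then show ?thesis by simp
qed

lemma labs_pos: "0 \<le> (x::'a::lattice_ab_group_add) \<Longrightarrow> labs x = x"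
  unfolding labs_def by (rule sup_absorb1) (meson neg_le_0_iff_le order_trans)

lemma labs_minus: "labs (- (x::'a::lattice_ab_group_add)) = labs x"
  by (simp add: labs_def sup_commute)

lemma labs_zero: "labs (0::'a::lattice_ab_group_add) = 0" by (simp add: labs_def)

lemma labs_le_iff: "labs (x::'a::lattice_ab_group_add) \<le> y \<longleftrightarrow> x \<le> y \<and> - x \<le> y"
  by (simp add: labs_def)

lemma labs_labs: "labs (labs (x::'a::lattice_ab_group_add)) = labs x"
  by (rule labs_pos[OF labs_nonneg])

lemma labs_eq_prts: "labs (x::'a::lattice_ab_group_add) = pprt x - nprt x"
proof -
  have "0 \<le> sup x (- x)" using labs_nonneg unfolding labs_def .
  then have "sup (sup x (- x)) 0 = sup x (- x)"
    by (rule sup_absorb1)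
  then show ?thesis
    by (simp add: add_sup_inf_distribs ac_simps pprt_def nprt_def labs_def)
qed

lemma labs_triangle: "labs ((x::'a::lattice_ab_group_add) + y) \<le> labs x + labs y"
proof -
  have "x + y \<le> labs x + labs y" by (intro add_mono labs_ge)
  moreover have "- (x + y) \<le> labs x + labs y"
    by (simp only: minus_add_distrib add.commute[of "- y"]) (intro add_mono labs_ge)
  ultimately show ?thesis by (simp add: labs_le_iff)
qed

lemma pprt_le_labs: "pprt (x::'a::lattice_ab_group_add) \<le> labs x"
  by (simp add: pprt_def labs_def le_supI1 labs_nonneg[unfolded labs_def])

lemma nprt_le_labs: "- nprt (x::'a::lattice_ab_group_add) \<le> labs x"
  by (simp add: labs_eq_prts)

lemma riesz_ineq:
  fixes a b c :: "'a::lattice_ab_group_add"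
  assumes "0 \<le> a" "0 \<le> b" "0 \<le> c"
  shows "inf (a + b) c \<le> inf a c + inf b c"
proof -
  have "inf a c + inf b c = inf (a + inf b c) (c + inf b c)"
    by (simp add: add_inf_distrib_right)
  moreover have "a + inf b c = inf (a + b) (a + c)" by (simp add: add_inf_distrib_left)
  moreover have "inf (a + b) c \<le> inf (a + b) (a + c)"
    using assms by (simp add: le_infI2 add_increasing)
  moreover have "inf (a + b) c \<le> c + inf b c"
    using assms by (simp add: le_infI2 add_increasing2)
  ultimately show ?thesis by simp
qed

lemma disj_add_sup: "inf (a::'a::lattice_ab_group_add) b = 0 \<Longrightarrow> a + b = sup a b"
  using add_eq_inf_sup[of a b] by simp

lemma diff_inf_pprt: "(x::'a::lattice_ab_group_add) - inf x w = pprt (x - w)"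
  by (simp add: diff_inf_eq_sup pprt_def add_sup_distrib_left sup_commute)

lemma inf_add_le: "0 \<le> (b::'a::lattice_ab_group_add) \<Longrightarrow> inf x (a + b) \<le> inf x a + b"
proof -
  assume b: "0 \<le> b"
  have "inf x (a + b) \<le> inf (x + b) (a + b)"
    using b by (intro inf_mono) (simp_all add: add_increasing2)
  then show ?thesis by (simp add: add_inf_distrib_right)
qed

lemma sum_disjoint_le:
  fixes w :: "nat \<Rightarrow> 'a::lattice_ab_group_add"
  assumes pos: "\<And>k. 0 \<le> w k" and dis: "\<And>j k. j \<noteq> k \<Longrightarrow> inf (w j) (w k) = 0"
    and le: "\<And>k. w k \<le> u"
  shows "sum w {..<N} \<le> u"
proof -
  have "sum w {..<N} \<le> u \<and> 0 \<le> sum w {..<N} \<and> (\<forall>m\<ge>N. inf (sum w {..<N}) (w m) = 0)"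
  proof (induction N)
    case 0
    have "0 \<le> u" using pos[of 0] le[of 0] by (rule order_trans)
    then show ?case using pos by (simp add: inf_absorb1)
  next
    case (Suc N)
    let ?S = "sum w {..<N}"
    have i0: "inf ?S (w N) = 0" using Suc by simp
    have eq: "sum w {..<Suc N} = sup ?S (w N)" using disj_add_sup[OF i0] by simp
    have "sup ?S (w N) \<le> u" using Suc le by simp
    moreover have "0 \<le> sup ?S (w N)" using Suc by (simp add: le_supI1)
    moreover have "inf (sup ?S (w N)) (w m) = 0" if "m \<ge> Suc N" for m
    proof -
      have "inf (sup ?S (w N)) (w m) = sup (inf ?S (w m)) (inf (w N) (w m))"
        by (simp add: inf_sup_distrib2)
      also have "\<dots> = 0" using Suc that dis[of N m] by simp
      finally show ?thesis .
    qed
    ultimately show ?case using eq by simp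
  qed
  then show ?thesis by simp
qed

lemma labs_sum_le: "labs (sum (f::_\<Rightarrow>'a::lattice_ab_group_add) A) \<le> sum (\<lambda>i. labs (f i)) A"
proof (induction A rule: infinite_finite_induct)
  case (infinite A) then show ?case by (simp add: labs_zero)
next
  case empty then show ?case by (simp add: labs_zero)
next
  case (insert x F)
  then show ?case using labs_triangle[of "f x" "sum f F"]
    by (simp add: add_left_mono order_trans)
qed

lemma nprt_lip: "labs (nprt (a::'a::lattice_ab_group_add) - nprt b) \<le> labs (a - b)"
proof -
  have key: "nprt x - nprt y \<le> labs (x - y)" for x y :: "'a::lattice_ab_group_add"
  proof -
    have "x \<le> y + labs (x - y)" using labs_ge(1)[of "x - y"] by (simp add: algebra_simps)
    then have "inf x 0 \<le> inf (y + labs (x - y)) 0" by (rule inf_mono) simp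
    also have "\<dots> \<le> inf (y + labs (x - y)) (labs (x - y))"
      by (rule inf_mono) (simp_all add: labs_nonneg)
    also have "\<dots> = inf y 0 + labs (x - y)" by (simp add: add_inf_distrib_right)
    finally show ?thesis unfolding nprt_def diff_le_eq by (simp only: add.commute)
  qed
  have "nprt a - nprt b \<le> labs (a - b)" by (rule key)
  moreover have "- (nprt a - nprt b) \<le> labs (a - b)"
    using key[of b a] labs_minus[of "a - b"] by simp
  ultimately show ?thesis by (simp add: labs_le_iff)
qed

lemma pprt_inf_zero:
  fixes p q :: "'a::lattice_ab_group_add"
  shows "inf (pprt p) (pprt q) = pprt (inf p q)"
  by (simp add: pprt_def sup_inf_distrib2)


lemma norm_labs: "norm (labs (x::'a::banach_lattice)) = norm x"
proof (rule antisym)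
  have e: "sup (labs x) (- labs x) = sup x (- x)" by (metis labs_labs labs_def)
  show "norm (labs x) \<le> norm x"
    by (metis lattice_norm e order_refl)
  show "norm x \<le> norm (labs x)"
    by (metis lattice_norm e order_refl)
qed

lemma norm_mono_pos:
  fixes x y :: "'a::banach_lattice"
  assumes "0 \<le> x" "x \<le> y" shows "norm x \<le> norm y"
proof -
  have y: "0 \<le> y" using assms by simp
  have "sup x (- x) \<le> sup y (- y)"
    using labs_pos[OF assms(1)] labs_pos[OF y] assms(2) by (simp add: labs_def)
  then show ?thesis by (rule lattice_norm)
qed

lemma scaleR_sup_pos:
  fixes a b :: "'a::banach_lattice"
  assumes c: "0 \<le> c" shows "c *\<^sub>R sup a b = sup (c *\<^sub>R a) (c *\<^sub>R b)"
proof (cases "c = 0")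
  case True then show ?thesis by simp
next
  case False
  then have c': "0 < c" using c by simp
  show ?thesis
  proof (rule antisym)
    have "sup a b \<le> (1/c) *\<^sub>R sup (c *\<^sub>R a) (c *\<^sub>R b)"
    proof (rule sup_least)
      have "a = (1/c) *\<^sub>R (c *\<^sub>R a)" using c' by simp
      also have "\<dots> \<le> (1/c) *\<^sub>R sup (c *\<^sub>R a) (c *\<^sub>R b)"
        using c' by (intro scaleR_left_mono) simp_all
      finally show "a \<le> (1/c) *\<^sub>R sup (c *\<^sub>R a) (c *\<^sub>R b)" .
      have "b = (1/c) *\<^sub>R (c *\<^sub>R b)" using c' by simp
      also have "\<dots> \<le> (1/c) *\<^sub>R sup (c *\<^sub>R a) (c *\<^sub>R b)"
        using c' by (intro scaleR_left_mono) simp_all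
      finally show "b \<le> (1/c) *\<^sub>R sup (c *\<^sub>R a) (c *\<^sub>R b)" .
    qed
    then have "c *\<^sub>R sup a b \<le> c *\<^sub>R ((1/c) *\<^sub>R sup (c *\<^sub>R a) (c *\<^sub>R b))"
      using c by (rule scaleR_left_mono)
    then show "c *\<^sub>R sup a b \<le> sup (c *\<^sub>R a) (c *\<^sub>R b)" using c' by simp
    show "sup (c *\<^sub>R a) (c *\<^sub>R b) \<le> c *\<^sub>R sup a b"
      using c by (intro sup_least scaleR_left_mono) simp_all
  qed
qed

lemma scaleR_inf_pos:
  fixes a b :: "'a::banach_lattice"
  assumes c: "0 \<le> c" shows "c *\<^sub>R inf a b = inf (c *\<^sub>R a) (c *\<^sub>R b)"
proof -
  have "c *\<^sub>R inf a b = c *\<^sub>R (- sup (- a) (- b))" by (simp only: inf_eq_neg_sup[of a b])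
  also have "\<dots> = - (c *\<^sub>R sup (- a) (- b))" by (rule scaleR_minus_right)
  also have "\<dots> = - sup (c *\<^sub>R (- a)) (c *\<^sub>R (- b))" by (simp only: scaleR_sup_pos[OF c])
  also have "\<dots> = - sup (- (c *\<^sub>R a)) (- (c *\<^sub>R b))" by (simp only: scaleR_minus_right)
  also have "\<dots> = inf (c *\<^sub>R a) (c *\<^sub>R b)" by (simp only: inf_eq_neg_sup[of "c *\<^sub>R a" "c *\<^sub>R b"])
  finally show ?thesis .
qed

lemma labs_scaleR: "labs (c *\<^sub>R (x::'a::banach_lattice)) = \<bar>c\<bar> *\<^sub>R labs x"
proof (cases "0 \<le> c")
  case True
  then show ?thesis using scaleR_sup_pos[OF True, of x "- x"] by (simp add: labs_def)
next
  case False
  then have "0 \<le> - c" by simp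
  then have "labs ((- c) *\<^sub>R x) = (- c) *\<^sub>R labs x"
    using scaleR_sup_pos[of "- c" x "- x"] by (simp add: labs_def)
  moreover have "labs (c *\<^sub>R x) = labs ((- c) *\<^sub>R x)"
    using labs_minus[of "c *\<^sub>R x"] by simp
  ultimately show ?thesis using False by simp
qed

lemma pprt_scaleR_pos: "0 \<le> c \<Longrightarrow> pprt (c *\<^sub>R (x::'a::banach_lattice)) = c *\<^sub>R pprt x"
  using scaleR_sup_pos[of c x 0] by (simp add: pprt_def)

lemma nprt_scaleR_pos: "0 \<le> c \<Longrightarrow> nprt (c *\<^sub>R (x::'a::banach_lattice)) = c *\<^sub>R nprt x"
  using scaleR_inf_pos[of c x 0] by (simp add: nprt_def)

lemma closed_nonneg:
  fixes X :: "nat \<Rightarrow> 'a::banach_lattice"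
  assumes pos: "\<And>n. 0 \<le> X n" and lim: "X \<longlonglongrightarrow> l"
  shows "0 \<le> l"
proof -
  have b: "norm (nprt l) \<le> norm (X n - l)" for n
  proof -
    have "nprt (X n) = 0" using pos[of n] by simp
    then have "norm (nprt l) = norm (nprt (X n) - nprt l)" by simp
    also have "\<dots> \<le> norm (X n - l)"
      using nprt_lip[of "X n" l] by (metis lattice_norm labs_def)
    finally show ?thesis .
  qed
  have "(\<lambda>n. norm (X n - l)) \<longlonglongrightarrow> 0"
    using lim by (simp add: LIM_zero_iff tendsto_norm_zero)
  then have "norm (nprt l) \<le> 0"
    using b by (intro tendsto_lowerbound[of "\<lambda>n. norm (X n - l)"]) (auto intro: always_eventually)
  then have "nprt l = 0" by simp
  then show ?thesis by (simp add: zero_le_iff_zero_nprt)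
qed

lemma suminf_nonneg_bl:
  fixes f :: "nat \<Rightarrow> 'a::banach_lattice"
  assumes "summable f" "\<And>n. 0 \<le> f n" shows "0 \<le> suminf f"
  using closed_nonneg[OF _ summable_LIMSEQ[OF assms(1)]] assms(2) by (simp add: sum_nonneg)

lemma disj_lemma:
  fixes a b :: "'a::banach_lattice"
  assumes b: "0 \<le> b" and t: "0 \<le> t" and st: "1 \<le> s * t"
  shows "inf (pprt (a - s *\<^sub>R b)) (pprt (b - t *\<^sub>R a)) = 0"
proof -
  define p where "p = a - s *\<^sub>R b"
  define q where "q = b - t *\<^sub>R a"
  define m where "m = inf p q"
  have "t *\<^sub>R m \<le> t *\<^sub>R p" using t by (intro scaleR_left_mono) (simp_all add: m_def)
  moreover have "m \<le> q" by (simp add: m_def)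
  ultimately have "t *\<^sub>R m + m \<le> t *\<^sub>R p + q" by (rule add_mono)
  also have "t *\<^sub>R p + q = (1 - s * t) *\<^sub>R b" by (simp add: p_def q_def algebra_simps)
  also have "\<dots> \<le> 0 *\<^sub>R b" using st b by (intro scaleR_right_mono) simp_all
  finally have "(t + 1) *\<^sub>R m \<le> 0" by (simp add: algebra_simps)
  then have "(1 / (t + 1)) *\<^sub>R ((t + 1) *\<^sub>R m) \<le> (1 / (t + 1)) *\<^sub>R 0"
    using t by (intro scaleR_left_mono) simp_all
  then have "m \<le> 0" using t by simp
  then show ?thesis unfolding pprt_inf_zero by (simp add: p_def[symmetric] q_def[symmetric] m_def[symmetric] pprt_def sup_absorb2)
qed

lemma pos_dual: "dual_le 0 f \<longleftrightarrow> (\<forall>x. 0 \<le> x \<longrightarrow> 0 \<le> blinfun_apply f x)"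
  by (simp add: dual_le_def)

lemma posf_mono:
  assumes "dual_le 0 f" "x \<le> y" shows "blinfun_apply f x \<le> blinfun_apply f y"
proof -
  have "0 \<le> blinfun_apply f (y - x)" using assms by (simp add: dual_le_def)
  then show ?thesis by (simp add: blinfun.diff_right)
qed

lemma posf_abs:
  assumes "dual_le 0 f" shows "\<bar>blinfun_apply f x\<bar> \<le> blinfun_apply f (labs x)"
proof -
  have "x = pprt x + nprt x" by (rule prts)
  then have fx: "blinfun_apply f x = blinfun_apply f (pprt x) + blinfun_apply f (nprt x)"
    by (metis blinfun.add_right)
  have l: "blinfun_apply f (labs x) = blinfun_apply f (pprt x) - blinfun_apply f (nprt x)"
    by (simp add: labs_eq_prts blinfun.diff_right)
  have a: "0 \<le> blinfun_apply f (pprt x)" using assms by (simp add: dual_le_def)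
  have "0 \<le> blinfun_apply f (- nprt x)" using assms by (simp add: dual_le_def)
  then have b: "blinfun_apply f (nprt x) \<le> 0" by (simp add: blinfun.minus_right)
  show ?thesis unfolding abs_le_iff fx l using a b by linarith
qed

lemma posf_witness:
  fixes f :: "'a::banach_lattice \<Rightarrow>\<^sub>L real"
  assumes f: "dual_le 0 f" and r: "0 \<le> r" "r < norm f"
  shows "\<exists>x. 0 \<le> x \<and> norm x \<le> 1 \<and> r < blinfun_apply f x"
proof (rule ccontr)
  assume "\<not> ?thesis"
  then have H: "\<And>x. 0 \<le> x \<Longrightarrow> norm x \<le> 1 \<Longrightarrow> blinfun_apply f x \<le> r" by force
  have "norm (blinfun_apply f x) \<le> r * norm x" for x
  proof (cases "x = 0")
    case True then show ?thesis by simp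
  next
    case False
    then have nx: "0 < norm x" by simp
    define w where "w = (1 / norm x) *\<^sub>R labs x"
    have w0: "0 \<le> w" unfolding w_def using nx by (intro scaleR_nonneg_nonneg labs_nonneg) simp
    have "norm w = 1" unfolding w_def using nx by (simp add: norm_labs)
    then have "blinfun_apply f w \<le> r" using H w0 by simp
    then have "(1 / norm x) * blinfun_apply f (labs x) \<le> r"
      unfolding w_def by (simp add: blinfun.scaleR_right)
    then have "blinfun_apply f (labs x) \<le> r * norm x" using nx by (simp add: field_simps)
    then show ?thesis using posf_abs[OF f, of x] by simp
  qed
  then have "norm f \<le> r" using r by (intro norm_blinfun_bound) auto
  then show False using r by simp
qed

lemma ext_pos:
  fixes G :: "'a::banach_lattice \<Rightarrow> real"
  assumes add: "\<And>a b. 0 \<le> a \<Longrightarrow> 0 \<le> b \<Longrightarrow> G (a + b) = G a + G b"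
    and hom: "\<And>c a. 0 \<le> c \<Longrightarrow> 0 \<le> a \<Longrightarrow> G (c *\<^sub>R a) = c * G a"
    and bnd: "\<And>a. 0 \<le> a \<Longrightarrow> 0 \<le> G a \<and> G a \<le> K * norm a"
  shows "\<exists>g. dual_le 0 g \<and> (\<forall>a. 0 \<le> a \<longrightarrow> blinfun_apply g a = G a)"
proof -
  define P where "P x = pprt x" for x :: 'a
  define N where "N x = - nprt x" for x :: 'a
  have P0: "0 \<le> P x" and N0: "0 \<le> N x" for x by (simp_all add: P_def N_def)
  have PN: "x = P x - N x" for x by (simp add: P_def N_def prts[symmetric])
  define h where "h x = G (P x) - G (N x)" for x
  have G0: "G 0 = 0" using hom[of 0 0] by simp
  have key: "h x = G a - G b" if "0 \<le> a" "0 \<le> b" "x = a - b" for x a b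
  proof -
    have "P x - N x = a - b" by (metis PN that(3))
    have "P x + b = (P x - N x) + N x + b" by simp
    also have "\<dots> = (a - b) + N x + b" by (simp only: \<open>P x - N x = a - b\<close>)
    also have "\<dots> = a + N x" by simp
    finally have "P x + b = a + N x" .
    then have "G (P x + b) = G (a + N x)" by simp
    then have "G (P x) + G b = G a + G (N x)" using add that P0 N0 by simp
    then show ?thesis by (simp add: h_def)
  qed
  have hadd: "h (x + y) = h x + h y" for x y
  proof -
    have "h (x + y) = G (P x + P y) - G (N x + N y)"
    proof (rule key)
      show "x + y = P x + P y - (N x + N y)" by (metis PN add_diff_add)
    qed (auto intro: add_nonneg_nonneg P0 N0)
    then show ?thesis using add P0 N0 by (simp add: h_def)
  qed
  have hscale: "h (c *\<^sub>R x) = c *\<^sub>R h x" for c x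
  proof (cases "0 \<le> c")
    case True
    have "h (c *\<^sub>R x) = G (c *\<^sub>R P x) - G (c *\<^sub>R N x)"
    proof (rule key)
      show "c *\<^sub>R x = c *\<^sub>R P x - c *\<^sub>R N x" by (metis PN scaleR_right_diff_distrib)
    qed (auto intro: scaleR_nonneg_nonneg P0 N0 True)
    then show ?thesis using hom True P0 N0 by (simp add: h_def algebra_simps)
  next
    case False
    then have c: "0 \<le> - c" by simp
    have "h (c *\<^sub>R x) = G ((- c) *\<^sub>R N x) - G ((- c) *\<^sub>R P x)"
    proof (rule key)
      show "c *\<^sub>R x = (- c) *\<^sub>R N x - (- c) *\<^sub>R P x" by (metis PN scaleR_right_diff_distrib minus_diff_eq scaleR_minus_left scaleR_minus_right)
    qed (intro scaleR_nonneg_nonneg c N0 P0)+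
    also have "\<dots> = (- c) * G (N x) - (- c) * G (P x)" by (simp only: hom[OF c N0] hom[OF c P0])
    also have "\<dots> = c *\<^sub>R h x" by (simp add: h_def algebra_simps)
    finally show ?thesis .
  qed
  have nP: "norm (P x) \<le> norm x" for x
    using norm_mono_pos[OF P0 pprt_le_labs[of x, folded P_def]] by (simp add: norm_labs)
  have nN: "norm (N x) \<le> norm x" for x
    using norm_mono_pos[OF N0 nprt_le_labs[of x, folded N_def]] by (simp add: norm_labs)
  have hb: "norm (h x) \<le> norm x * (2 * \<bar>K\<bar>)" for x
  proof -
    have "G (P x) \<le> \<bar>K\<bar> * norm x"
    proof -
      have "K * norm (P x) \<le> \<bar>K\<bar> * norm (P x)" by (intro mult_right_mono) simp_all
      also have "\<dots> \<le> \<bar>K\<bar> * norm x" using nP[of x] by (intro mult_left_mono) simp_all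
      finally show ?thesis using bnd[OF P0, of x] by simp
    qed
    moreover have "G (N x) \<le> \<bar>K\<bar> * norm x"
    proof -
      have "K * norm (N x) \<le> \<bar>K\<bar> * norm (N x)" by (intro mult_right_mono) simp_all
      also have "\<dots> \<le> \<bar>K\<bar> * norm x" using nN[of x] by (intro mult_left_mono) simp_all
      finally show ?thesis using bnd[OF N0, of x] by simp
    qed
    moreover have "0 \<le> G (P x)" "0 \<le> G (N x)" using bnd[OF P0, of x] bnd[OF N0, of x] by simp_all
    ultimately have "\<bar>G (P x) - G (N x)\<bar> \<le> \<bar>K\<bar> * norm x" by (simp add: abs_le_iff)
    also have "\<dots> \<le> norm x * (2 * \<bar>K\<bar>)" by simp
    finally show ?thesis by (simp add: h_def)
  qed
  have bl: "bounded_linear h"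
    by (rule bounded_linear_intro[OF hadd hscale hb])
  define g where "g = Blinfun h"
  have ga: "blinfun_apply g = h" unfolding g_def using bl by (rule bounded_linear_Blinfun_apply)
  have hpos: "h a = G a" if "0 \<le> a" for a
    using key[OF that order_refl[of 0]] G0 by simp
  show ?thesis
    by (rule exI[of _ g]) (auto simp: pos_dual ga hpos bnd)
qed


definition hb_good :: "('b::real_normed_vector \<times> real) set \<Rightarrow> bool" where
  "hb_good G \<longleftrightarrow> (0, 0) \<in> G
     \<and> (\<forall>x a x' a'. (x, a) \<in> G \<longrightarrow> (x', a') \<in> G \<longrightarrow> (x + x', a + a') \<in> G)
     \<and> (\<forall>x a c. (x, a) \<in> G \<longrightarrow> (c *\<^sub>R x, c * a) \<in> G)
     \<and> (\<forall>x a. (x, a) \<in> G \<longrightarrow> a \<le> norm x)"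

lemma hb_extend:
  fixes M :: "('b::real_normed_vector \<times> real) set"
  assumes g: "hb_good M" and x0: "\<forall>a. (x0, a) \<notin> M"
  shows "\<exists>M'. hb_good M' \<and> M \<subseteq> M' \<and> M' \<noteq> M"
proof -
  have M0: "(0, 0) \<in> M" and Madd: "\<And>x a x' a'. (x, a) \<in> M \<Longrightarrow> (x', a') \<in> M \<Longrightarrow> (x + x', a + a') \<in> M"
    and Msc: "\<And>x a c. (x, a) \<in> M \<Longrightarrow> (c *\<^sub>R x, c * a) \<in> M"
    and Mb: "\<And>x a. (x, a) \<in> M \<Longrightarrow> a \<le> norm x"
    using g unfolding hb_good_def by blast+
  define S where "S = (\<lambda>p. snd p - norm (fst p - x0)) ` M"
  have key: "a - norm (s - x0) \<le> norm (s' + x0) - a'" if "(s, a) \<in> M" "(s', a') \<in> M" for s a s' a'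
  proof -
    have "a + a' \<le> norm (s + s')" using Mb[OF Madd[OF that]] .
    also have "s + s' = (s - x0) + (s' + x0)" by simp
    also have "norm \<dots> \<le> norm (s - x0) + norm (s' + x0)" by (rule norm_triangle_ineq)
    finally show ?thesis by simp
  qed
  define c where "c = Sup S"
  have Sne: "S \<noteq> {}" using M0 by (auto simp: S_def)
  have Sbdd: "bdd_above S"
    unfolding S_def bdd_above_def using key[OF _ M0] by force
  have c1: "a - norm (s - x0) \<le> c" if "(s, a) \<in> M" for s a
    unfolding c_def using Sbdd that by (intro cSup_upper) (force simp: S_def)+
  have c2: "c \<le> norm (s' + x0) - a'" if "(s', a') \<in> M" for s' a'
    unfolding c_def using Sne by (intro cSup_least) (auto simp: S_def intro: key[OF _ that])
  define M' where "M' = {(s + t *\<^sub>R x0, a + t * c) | s a t. (s, a) \<in> M}"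
  have "hb_good M'"
    unfolding hb_good_def
  proof (intro conjI allI impI)
    show "(0, 0) \<in> M'" unfolding M'_def using M0 by force
  next
    fix x a x' a' assume "(x, a) \<in> M'" "(x', a') \<in> M'"
    then obtain s b t s' b' t' where "(s, b) \<in> M" "(s', b') \<in> M"
      "x = s + t *\<^sub>R x0" "a = b + t * c" "x' = s' + t' *\<^sub>R x0" "a' = b' + t' * c"
      unfolding M'_def by blast
    note h = this
    show "(x + x', a + a') \<in> M'" unfolding M'_def
    proof (intro CollectI exI conjI)
      show "(x + x', a + a') = ((s + s') + (t + t') *\<^sub>R x0, (b + b') + (t + t') * c)"
        using h by (simp add: algebra_simps)
      show "(s + s', b + b') \<in> M" using h by (intro Madd)
    qed
  next
    fix x a r assume "(x, a) \<in> M'"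
    then obtain s b t where "(s, b) \<in> M" "x = s + t *\<^sub>R x0" "a = b + t * c"
      unfolding M'_def by blast
    note h = this
    show "(r *\<^sub>R x, r * a) \<in> M'" unfolding M'_def
    proof (intro CollectI exI conjI)
      show "(r *\<^sub>R x, r * a) = (r *\<^sub>R s + (r * t) *\<^sub>R x0, r * b + (r * t) * c)"
        using h by (simp add: algebra_simps)
      show "(r *\<^sub>R s, r * b) \<in> M" using h by (intro Msc)
    qed
  next
    fix x a assume "(x, a) \<in> M'"
    then obtain s b t where sb: "(s, b) \<in> M" and xa: "x = s + t *\<^sub>R x0" "a = b + t * c"
      unfolding M'_def by blast
    show "a \<le> norm x"
    proof (cases t "0::real" rule: linorder_cases)
      case equal then show ?thesis using Mb[OF sb] xa by simp
    next
      case greater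
      have "c \<le> norm ((1/t) *\<^sub>R s + x0) - (1/t) * b" using c2[OF Msc[OF sb, of "1/t"]] .
      moreover have "(1/t) *\<^sub>R s + x0 = (1/t) *\<^sub>R (s + t *\<^sub>R x0)"
        using greater by (simp add: algebra_simps)
      moreover have "norm ((1/t) *\<^sub>R (s + t *\<^sub>R x0)) = (1/t) * norm (s + t *\<^sub>R x0)"
        using greater by simp
      ultimately have "c \<le> (1/t) * norm (s + t *\<^sub>R x0) - (1/t) * b" by (simp only:)
      then have "t * c \<le> t * ((1/t) * norm (s + t *\<^sub>R x0) - (1/t) * b)"
        using greater by (intro mult_left_mono) simp_all
      also have "\<dots> = norm (s + t *\<^sub>R x0) - b" using greater by (simp add: right_diff_distrib)
      finally have "t * c \<le> norm (s + t *\<^sub>R x0) - b" .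
      then show ?thesis using xa by (simp add: algebra_simps)
    next
      case less
      define r where "r = - t"
      have r: "0 < r" using less by (simp add: r_def)
      have "(1/r) * b - norm ((1/r) *\<^sub>R s - x0) \<le> c" using c1[OF Msc[OF sb, of "1/r"]] by simp
      moreover have "(1/r) *\<^sub>R s - x0 = (1/r) *\<^sub>R (s + t *\<^sub>R x0)"
        using r by (simp add: algebra_simps r_def)
      moreover have "norm ((1/r) *\<^sub>R (s + t *\<^sub>R x0)) = (1/r) * norm (s + t *\<^sub>R x0)"
        using r by simp
      ultimately have "(1/r) * b - (1/r) * norm (s + t *\<^sub>R x0) \<le> c" by (simp only:)
      then have "r * ((1/r) * b - (1/r) * norm (s + t *\<^sub>R x0)) \<le> r * c"
        using r by (intro mult_left_mono) simp_all
      also have "r * ((1/r) * b - (1/r) * norm (s + t *\<^sub>R x0)) = b - norm (s + t *\<^sub>R x0)"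
        using r by (simp add: right_diff_distrib)
      finally have "b - norm (s + t *\<^sub>R x0) \<le> c * r" by (simp add: mult.commute)
      then show ?thesis using xa by (simp add: algebra_simps r_def)
    qed
  qed
  moreover have "M \<subseteq> M'"
  proof
    fix p assume "p \<in> M"
    then show "p \<in> M'" unfolding M'_def
      by (intro CollectI exI[of _ "fst p"] exI[of _ "snd p"] exI[of _ "0::real"]) simp
  qed
  moreover have "(x0, c) \<in> M'" unfolding M'_def
    using M0 by (intro CollectI exI[of _ "0"] exI[of _ "0::real"] exI[of _ "1::real"]) simp
  then have "M' \<noteq> M" using x0 by blast
  ultimately show ?thesis by blast
qed

lemma hahn_banach_norming:
  fixes y :: "'b::real_normed_vector"
  shows "\<exists>g::'b \<Rightarrow>\<^sub>L real. blinfun_apply g y = norm y"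
proof -
  define G0 where "G0 = {(t *\<^sub>R y, t * norm y) | t. True}"
  define A where "A = {G. hb_good G \<and> (y, norm y) \<in> G}"
  have G0mem: "p \<in> G0 \<longleftrightarrow> (\<exists>t. p = (t *\<^sub>R y, t * norm y))" for p
    by (auto simp: G0_def)
  have "hb_good G0"
    unfolding hb_good_def
  proof (intro conjI allI impI)
    show "(0, 0) \<in> G0" unfolding G0mem by (intro exI[of _ 0]) simp
  next
    fix x a x' a' assume "(x, a) \<in> G0" "(x', a') \<in> G0"
    then obtain t t' where "x = t *\<^sub>R y" "a = t * norm y" "x' = t' *\<^sub>R y" "a' = t' * norm y"
      unfolding G0mem by blast
    then show "(x + x', a + a') \<in> G0"
      unfolding G0mem by (intro exI[of _ "t + t'"]) (simp add: algebra_simps)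
  next
    fix x a c assume "(x, a) \<in> G0"
    then obtain t where "x = t *\<^sub>R y" "a = t * norm y" unfolding G0mem by blast
    then show "(c *\<^sub>R x, c * a) \<in> G0"
      unfolding G0mem by (intro exI[of _ "c * t"]) (simp add: algebra_simps)
  next
    fix x a assume "(x, a) \<in> G0"
    then obtain t where "x = t *\<^sub>R y" "a = t * norm y" unfolding G0mem by blast
    then show "a \<le> norm x" by (simp add: mult_right_mono)
  qed
  moreover have "(y, norm y) \<in> G0" unfolding G0mem by (intro exI[of _ 1]) simp
  ultimately have G0A: "G0 \<in> A" by (simp add: A_def)
  have "\<exists>M\<in>A. \<forall>X\<in>A. M \<subseteq> X \<longrightarrow> X = M"
  proof (rule Zorn_Lemma2, intro ballI)
    fix C assume C: "C \<in> chains A"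
    show "\<exists>U\<in>A. \<forall>X\<in>C. X \<subseteq> U"
    proof (cases "C = {}")
      case True then show ?thesis using G0A by blast
    next
      case False
      have CA: "C \<subseteq> A" using C by (rule chainsD2)
      have "\<Union>C \<in> A"
        unfolding A_def hb_good_def
      proof (intro CollectI conjI allI impI)
        obtain X where X: "X \<in> C" using False by blast
        then show "(0, 0) \<in> \<Union>C" "(y, norm y) \<in> \<Union>C" using CA by (auto simp: A_def hb_good_def)
      next
        fix x a x' a' assume "(x, a) \<in> \<Union>C" "(x', a') \<in> \<Union>C"
        then obtain X X' where X: "X \<in> C" "(x, a) \<in> X" and X': "X' \<in> C" "(x', a') \<in> X'" by blast
        then have "X \<subseteq> X' \<or> X' \<subseteq> X" using chainsD[OF C] by blast
        have goodC: "hb_good Z" if "Z \<in> C" for Z using that CA by (auto simp: A_def)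
        show "(x + x', a + a') \<in> \<Union>C"
        proof (cases "X \<subseteq> X'")
          case True
          then have "(x, a) \<in> X'" using X by blast
          then have "(x + x', a + a') \<in> X'" using goodC[OF X'(1)] X'(2) unfolding hb_good_def by blast
          then show ?thesis using X' by blast
        next
          case False
          then have "X' \<subseteq> X" using \<open>X \<subseteq> X' \<or> X' \<subseteq> X\<close> by blast
          then have "(x', a') \<in> X" using X' by blast
          then have "(x + x', a + a') \<in> X" using goodC[OF X(1)] X(2) unfolding hb_good_def by blast
          then show ?thesis using X by blast
        qed
      next
        fix x a c assume "(x, a) \<in> \<Union>C"
        then obtain X where X: "X \<in> C" "(x, a) \<in> X" by blast
        have "hb_good X" using X CA by (auto simp: A_def)
        then have "(c *\<^sub>R x, c * a) \<in> X" using X unfolding hb_good_def by blast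
        then show "(c *\<^sub>R x, c * a) \<in> \<Union>C" using X by blast
      next
        fix x a assume "(x, a) \<in> \<Union>C"
        then obtain X where X: "X \<in> C" "(x, a) \<in> X" by blast
        have "hb_good X" using X CA by (auto simp: A_def)
        then show "a \<le> norm x" using X unfolding hb_good_def by blast
      qed
      then show ?thesis by blast
    qed
  qed
  then obtain M where MA: "M \<in> A" and Mmax: "\<And>X. X \<in> A \<Longrightarrow> M \<subseteq> X \<Longrightarrow> X = M" by blast
  have gM: "hb_good M" and yM: "(y, norm y) \<in> M" using MA by (auto simp: A_def)
  have M0: "(0, 0) \<in> M" and Madd: "\<And>x a x' a'. (x, a) \<in> M \<Longrightarrow> (x', a') \<in> M \<Longrightarrow> (x + x', a + a') \<in> M"
    and Msc: "\<And>x a c. (x, a) \<in> M \<Longrightarrow> (c *\<^sub>R x, c * a) \<in> M"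
    and Mb: "\<And>x a. (x, a) \<in> M \<Longrightarrow> a \<le> norm x"
    using gM unfolding hb_good_def by blast+
  have dom: "\<exists>a. (x, a) \<in> M" for x
  proof (rule ccontr)
    assume "\<not> ?thesis"
    then obtain M' where "hb_good M'" "M \<subseteq> M'" "M' \<noteq> M" using hb_extend[OF gM] by blast
    moreover have "M' \<in> A" using calculation yM by (auto simp: A_def)
    ultimately show False using Mmax by blast
  qed
  have uniq: "a = b" if "(x, a) \<in> M" "(x, b) \<in> M" for x a b
  proof -
    have "(x + (-1) *\<^sub>R x, a + (-1) * b) \<in> M" using Madd[OF that(1) Msc[OF that(2)]] .
    then have "a - b \<le> 0" using Mb by fastforce
    moreover have "(x + (-1) *\<^sub>R x, b + (-1) * a) \<in> M" using Madd[OF that(2) Msc[OF that(1)]] .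
    then have "b - a \<le> 0" using Mb by fastforce
    ultimately show ?thesis by simp
  qed
  define h where "h x = (THE a. (x, a) \<in> M)" for x
  have hM: "(x, h x) \<in> M" for x
    unfolding h_def using dom[of x] uniq by (metis theI)
  have hval: "(x, a) \<in> M \<Longrightarrow> h x = a" for x a using uniq hM by blast
  have bl: "bounded_linear h"
  proof (rule bounded_linear_intro[where K=1])
    show "h (x + x') = h x + h x'" for x x' by (rule hval[OF Madd[OF hM hM]])
    show "h (r *\<^sub>R x) = r *\<^sub>R h x" for r x using hval[OF Msc[OF hM]] by simp
    show "norm (h x) \<le> norm x * 1" for x
    proof -
      have "h x \<le> norm x" by (rule Mb[OF hM])
      moreover have "(- 1) * h x \<le> norm x" using Mb[OF Msc[OF hM[of x], of "-1"]] by simp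
      ultimately show ?thesis by simp
    qed
  qed
  show ?thesis
    by (rule exI[of _ "Blinfun h"]) (simp add: bounded_linear_Blinfun_apply[OF bl] hval[OF yM])
qed


lemma dir_inf_pointwise:
  fixes D :: "('a::banach_lattice \<Rightarrow>\<^sub>L real) set"
  assumes ne: "D \<noteq> {}"
    and dir: "\<forall>f\<in>D. \<forall>g\<in>D. \<exists>h\<in>D. dual_le h f \<and> dual_le h g"
    and pos: "\<forall>f\<in>D. dual_le 0 f"
    and inf0: "\<forall>h. (\<forall>f\<in>D. dual_le h f) \<longrightarrow> dual_le h 0"
    and a: "0 \<le> a" and eta: "0 < \<eta>"
  shows "\<exists>f\<in>D. blinfun_apply f a < \<eta>"
proof -
  obtain f0 where f0: "f0 \<in> D" using ne by blast
  define G where "G x = (INF f\<in>D. blinfun_apply f x)" for x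
  have fpos: "0 \<le> blinfun_apply f x" if "f \<in> D" "0 \<le> x" for f x
    using pos that by (simp add: pos_dual)
  have bdd: "bdd_below ((\<lambda>f. blinfun_apply f x) ` D)" if "0 \<le> x" for x
    using fpos that by (intro bdd_belowI[of _ 0]) auto
  have Gle: "G x \<le> blinfun_apply f x" if "f \<in> D" "0 \<le> x" for f x
    unfolding G_def using bdd[OF that(2)] that(1) by (rule cINF_lower)
  have Gge: "c \<le> G x" if "\<And>f. f \<in> D \<Longrightarrow> c \<le> blinfun_apply f x" for c x
    unfolding G_def using ne that by (rule cINF_greatest)
  have G0: "0 \<le> G x" if "0 \<le> x" for x using fpos that by (intro Gge) auto
  have Gless: "\<exists>f\<in>D. blinfun_apply f x < c" if "0 \<le> x" "G x < c" for x c
    using that(2) unfolding G_def using cINF_less_iff[OF ne bdd[OF that(1)]] by blast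
  have Gadd: "G (x + y) = G x + G y" if x: "0 \<le> x" and y: "0 \<le> y" for x y
  proof (rule antisym)
    have xy: "0 \<le> x + y" using x y by simp
    show "G x + G y \<le> G (x + y)"
      using Gle[OF _ x] Gle[OF _ y] by (intro Gge) (auto simp: blinfun.add_right intro: add_mono)
    show "G (x + y) \<le> G x + G y"
    proof (rule field_le_epsilon)
      fix e :: real assume e: "0 < e"
      obtain f1 where f1: "f1 \<in> D" "blinfun_apply f1 x < G x + e/2"
        using Gless[OF x, of "G x + e/2"] e by auto
      obtain f2 where f2: "f2 \<in> D" "blinfun_apply f2 y < G y + e/2"
        using Gless[OF y, of "G y + e/2"] e by auto
      obtain h where h: "h \<in> D" "dual_le h f1" "dual_le h f2" using dir f1(1) f2(1) by blast
      have "G (x + y) \<le> blinfun_apply h (x + y)" using Gle[OF h(1) xy] .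
      also have "\<dots> = blinfun_apply h x + blinfun_apply h y" by (simp add: blinfun.add_right)
      also have "\<dots> \<le> blinfun_apply f1 x + blinfun_apply f2 y"
        using h x y by (intro add_mono) (auto simp: dual_le_def)
      finally show "G (x + y) \<le> G x + G y + e" using f1 f2 by simp
    qed
  qed
  have Ghom: "G (c *\<^sub>R x) = c * G x" if c: "0 \<le> c" and x: "0 \<le> x" for c x
  proof (cases "c = 0")
    case True
    have "G 0 = 0"
      using G0[of 0] Gle[OF f0, of 0] by simp
    then show ?thesis using True by simp
  next
    case False
    then have c': "0 < c" using c by simp
    have cx: "0 \<le> c *\<^sub>R x" using c x by (rule scaleR_nonneg_nonneg)
    show ?thesis
    proof (rule antisym)
      have "G (c *\<^sub>R x) / c \<le> G x"
        using Gle[OF _ cx] c' by (intro Gge) (simp add: blinfun.scaleR_right divide_le_eq mult.commute)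
      then show "G (c *\<^sub>R x) \<le> c * G x" using c' by (simp add: divide_le_eq mult.commute)
      show "c * G x \<le> G (c *\<^sub>R x)"
        using Gle[OF _ x] c' by (intro Gge) (simp add: blinfun.scaleR_right)
    qed
  qed
  have Gbnd: "0 \<le> G x \<and> G x \<le> norm f0 * norm x" if "0 \<le> x" for x
    using G0[OF that] Gle[OF f0 that] norm_blinfun[of f0 x] by simp
  obtain g where g: "dual_le 0 g" and ga: "\<And>x. 0 \<le> x \<Longrightarrow> blinfun_apply g x = G x"
    using ext_pos[of G "norm f0"] Gadd Ghom Gbnd by blast
  have "dual_le g f" if "f \<in> D" for f
    unfolding dual_le_def using ga Gle[OF that] by simp
  then have "dual_le g 0" using inf0 by blast
  then have "blinfun_apply g a \<le> 0" using a by (simp add: dual_le_def)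
  then have "G a \<le> 0" using ga[OF a] by simp
  then have "G a < \<eta>" using eta by simp
  then show ?thesis using Gless[OF a] by blast
qed

lemma pos_decomp:
  fixes g :: "'a::banach_lattice \<Rightarrow>\<^sub>L real"
  shows "\<exists>p q. dual_le 0 p \<and> dual_le 0 q \<and> g = p - q"
proof -
  define I where "I a = {b. 0 \<le> b \<and> b \<le> a}" for a :: 'a
  define G where "G a = (SUP b\<in>I a. blinfun_apply g b)" for a
  have Ine: "I a \<noteq> {}" if "0 \<le> a" for a using that by (auto simp: I_def)
  have gb: "blinfun_apply g b \<le> norm g * norm a" if "b \<in> I a" for a b
  proof -
    have "blinfun_apply g b \<le> norm g * norm b"
      using norm_blinfun[of g b] by simp
    also have "\<dots> \<le> norm g * norm a"
      using that by (intro mult_left_mono norm_mono_pos) (auto simp: I_def)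
    finally show ?thesis .
  qed
  have bdd: "bdd_above ((\<lambda>b. blinfun_apply g b) ` I a)" for a
    using gb by (intro bdd_aboveI[of _ "norm g * norm a"]) auto
  have Gup: "blinfun_apply g b \<le> G a" if "b \<in> I a" for a b
    unfolding G_def using that bdd by (rule cSUP_upper)
  have Gleast: "G a \<le> c" if "0 \<le> a" "\<And>b. b \<in> I a \<Longrightarrow> blinfun_apply g b \<le> c" for a c
    unfolding G_def using Ine[OF that(1)] that(2) by (rule cSUP_least)
  have G0: "0 \<le> G a" if "0 \<le> a" for a
    using Gup[of 0 a] that by (simp add: I_def)
  have Gself: "blinfun_apply g a \<le> G a" if "0 \<le> a" for a
    using Gup[of a a] that by (simp add: I_def)
  have Gadd: "G (a1 + a2) = G a1 + G a2" if a1: "0 \<le> a1" and a2: "0 \<le> a2" for a1 a2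
  proof (rule antisym)
    show "G (a1 + a2) \<le> G a1 + G a2"
    proof (rule Gleast)
      show "0 \<le> a1 + a2" using a1 a2 by simp
      fix b assume b: "b \<in> I (a1 + a2)"
      have b0: "0 \<le> b" and ba: "b \<le> a1 + a2" using b by (auto simp: I_def)
      have "inf b a1 \<in> I a1" using b0 a1 by (auto simp: I_def)
      moreover have "b - inf b a1 \<in> I a2"
      proof -
        have "b - inf b a1 = pprt (b - a1)" by (rule diff_inf_pprt)
        moreover have "pprt (b - a1) \<le> a2" using ba a2 by (simp add: pprt_def algebra_simps)
        ultimately show ?thesis by (auto simp: I_def)
      qed
      ultimately have "blinfun_apply g (inf b a1) + blinfun_apply g (b - inf b a1) \<le> G a1 + G a2"
        by (intro add_mono Gup)
      moreover have "blinfun_apply g (inf b a1) + blinfun_apply g (b - inf b a1) = blinfun_apply g b"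
        by (metis blinfun.add_right diff_add_cancel add.commute)
      ultimately show "blinfun_apply g b \<le> G a1 + G a2" by simp
    qed
    have "blinfun_apply g b2 \<le> G (a1 + a2) - G a1" if b2: "b2 \<in> I a2" for b2
    proof -
      have "G a1 \<le> G (a1 + a2) - blinfun_apply g b2"
      proof (rule Gleast[OF a1])
        fix b1 assume b1: "b1 \<in> I a1"
        have "b1 + b2 \<in> I (a1 + a2)" using b1 b2 by (auto simp: I_def intro: add_mono)
        then have "blinfun_apply g (b1 + b2) \<le> G (a1 + a2)" by (rule Gup)
        then show "blinfun_apply g b1 \<le> G (a1 + a2) - blinfun_apply g b2"
          by (simp add: blinfun.add_right)
      qed
      then show ?thesis by simp
    qed
    then have "G a2 \<le> G (a1 + a2) - G a1" by (intro Gleast[OF a2])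
    then show "G a1 + G a2 \<le> G (a1 + a2)" by simp
  qed
  have Ghom: "G (c *\<^sub>R a) = c * G a" if c: "0 \<le> c" and a: "0 \<le> a" for c a
  proof (cases "c = 0")
    case True
    have "I 0 = {0}" by (auto simp: I_def)
    then have "G 0 = 0" by (simp add: G_def)
    then show ?thesis using True by simp
  next
    case False
    then have c': "0 < c" using c by simp
    have ca: "0 \<le> c *\<^sub>R a" using c a by (rule scaleR_nonneg_nonneg)
    show ?thesis
    proof (rule antisym)
      show "G (c *\<^sub>R a) \<le> c * G a"
      proof (rule Gleast[OF ca])
        fix b assume b: "b \<in> I (c *\<^sub>R a)"
        have "(1/c) *\<^sub>R b \<in> I a"
        proof -
          have "0 \<le> (1/c) *\<^sub>R b" using b c' by (intro scaleR_nonneg_nonneg) (auto simp: I_def)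
          moreover have "(1/c) *\<^sub>R b \<le> (1/c) *\<^sub>R (c *\<^sub>R a)"
            using b c' by (intro scaleR_left_mono) (auto simp: I_def)
          ultimately show ?thesis using c' by (simp add: I_def)
        qed
        then have "blinfun_apply g ((1/c) *\<^sub>R b) \<le> G a" by (rule Gup)
        then have "(1/c) * blinfun_apply g b \<le> G a" by (simp add: blinfun.scaleR_right)
        then show "blinfun_apply g b \<le> c * G a" using c' by (simp add: field_simps)
      qed
      have "G a \<le> G (c *\<^sub>R a) / c"
      proof (rule Gleast[OF a])
        fix b assume b: "b \<in> I a"
        have "c *\<^sub>R b \<in> I (c *\<^sub>R a)"
          using b c by (auto simp: I_def intro: scaleR_nonneg_nonneg scaleR_left_mono)
        then have "blinfun_apply g (c *\<^sub>R b) \<le> G (c *\<^sub>R a)" by (rule Gup)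
        then show "blinfun_apply g b \<le> G (c *\<^sub>R a) / c" using c'
          by (simp add: blinfun.scaleR_right field_simps)
      qed
      then show "c * G a \<le> G (c *\<^sub>R a)" using c' by (simp add: field_simps)
    qed
  qed
  have Gbnd: "0 \<le> G a \<and> G a \<le> norm g * norm a" if "0 \<le> a" for a
    using G0[OF that] gb that by (auto intro: Gleast)
  obtain p where p: "dual_le 0 p" and pa: "\<And>x. 0 \<le> x \<Longrightarrow> blinfun_apply p x = G x"
    using ext_pos[of G "norm g"] Gadd Ghom Gbnd by blast
  have "dual_le 0 (p - g)"
    using pa Gself by (simp add: dual_le_def blinfun.diff_left)
  then show ?thesis using p by (intro exI[of _ p] exI[of _ "p - g"]) simp
qed

lemma disjoint_uaw_null:
  fixes y :: "nat \<Rightarrow> 'a::banach_lattice"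
  assumes pos: "\<And>k. 0 \<le> y k" and dis: "\<And>j k. j \<noteq> k \<Longrightarrow> inf (y j) (y k) = 0"
  shows "uaw_null y"
  unfolding uaw_null_def weakly_null_def
proof (intro allI impI)
  fix u :: 'a and g :: "'a \<Rightarrow>\<^sub>L real"
  assume u: "0 \<le> u"
  define w where "w k = inf (labs (y k)) u" for k
  have w_eq: "w k = inf (y k) u" for k using pos by (simp add: w_def labs_pos)
  have w0: "0 \<le> w k" for k using pos u by (simp add: w_eq)
  have wu: "w k \<le> u" for k by (simp add: w_eq)
  have wd: "inf (w j) (w k) = 0" if "j \<noteq> k" for j k
  proof (rule antisym)
    have "inf (w j) (w k) \<le> inf (y j) (y k)" by (simp add: w_eq inf.coboundedI1 le_infI1 le_infI2)
    then show "inf (w j) (w k) \<le> 0" using dis[OF that] by simp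
    show "0 \<le> inf (w j) (w k)" using w0 by simp
  qed
  define e where "e k = sgn (blinfun_apply g (w k))" for k
  have psum: "(\<Sum>k<N. \<bar>blinfun_apply g (w k)\<bar>) \<le> norm g * norm u" for N
  proof -
    have "(\<Sum>k<N. \<bar>blinfun_apply g (w k)\<bar>) = (\<Sum>k<N. e k * blinfun_apply g (w k))"
      by (intro sum.cong) (simp_all add: e_def abs_sgn)
    also have "\<dots> = blinfun_apply g (\<Sum>k<N. e k *\<^sub>R w k)"
      by (simp add: blinfun.sum_right blinfun.scaleR_right)
    also have "\<dots> \<le> norm g * norm (\<Sum>k<N. e k *\<^sub>R w k)"
      using norm_blinfun[of g] by (metis abs_ge_self order_trans real_norm_def)
    also have "norm (\<Sum>k<N. e k *\<^sub>R w k) \<le> norm u"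
    proof -
      have "labs (\<Sum>k<N. e k *\<^sub>R w k) \<le> (\<Sum>k<N. labs (e k *\<^sub>R w k))" by (rule labs_sum_le)
      also have "\<dots> \<le> (\<Sum>k<N. w k)"
      proof (rule sum_mono)
        fix k
        have "labs (e k *\<^sub>R w k) = \<bar>e k\<bar> *\<^sub>R w k" using w0 by (simp add: labs_scaleR labs_pos)
        also have "\<dots> \<le> 1 *\<^sub>R w k"
          using w0 by (intro scaleR_right_mono) (auto simp: e_def sgn_if)
        finally show "labs (e k *\<^sub>R w k) \<le> w k" by simp
      qed
      also have "\<dots> \<le> u" by (rule sum_disjoint_le[OF w0 wd wu])
      finally have "labs (\<Sum>k<N. e k *\<^sub>R w k) \<le> labs u" using u by (simp add: labs_pos)
      then show ?thesis by (intro lattice_norm) (simp add: labs_def)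
    qed
    then have "norm g * norm (\<Sum>k<N. e k *\<^sub>R w k) \<le> norm g * norm u"
      by (intro mult_left_mono) simp_all
    finally show ?thesis .
  qed
  have "summable (\<lambda>k. \<bar>blinfun_apply g (w k)\<bar>)"
    by (rule summableI_nonneg_bounded[where x="norm g * norm u"]) (simp_all add: psum)
  then have "(\<lambda>k. \<bar>blinfun_apply g (w k)\<bar>) \<longlonglongrightarrow> 0" by (rule summable_LIMSEQ_zero)
  then show "(\<lambda>n. blinfun_apply g (inf (labs (y n)) u)) \<longlonglongrightarrow> 0"
    by (simp add: tendsto_rabs_zero_iff w_def)
qed


lemma disjointify:
  fixes w s y :: "nat \<Rightarrow> 'a::banach_lattice" and z :: 'a
  assumes pos: "\<And>k. 0 \<le> w k" and bnd: "\<And>k. norm (w k) \<le> M"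
    and s_def: "s = (\<lambda>k. sum w {..<k})"
    and z_def: "z = suminf (\<lambda>j. ((1/2::real)^j) *\<^sub>R w j)"
    and y_def: "y = (\<lambda>k. pprt (w k - ((4^k) *\<^sub>R s k + ((1/2::real)^k) *\<^sub>R z)))"
  shows "0 \<le> z" and "\<And>k. 0 \<le> y k" and "\<And>k. y k \<le> w k"
    and "\<And>j k. j \<noteq> k \<Longrightarrow> inf (y j) (y k) = 0"
    and "\<And>k. w k - y k \<le> inf (w k) ((4^k) *\<^sub>R s k) + ((1/2)^k) *\<^sub>R z"
    and "\<And>k. w k - y k \<le> (4^k) *\<^sub>R s k + ((1/2)^k) *\<^sub>R z"
proof -
  define v where "v j = ((1/2::real)^j) *\<^sub>R w j" for j
  have v0: "0 \<le> v j" for j unfolding v_def by (intro scaleR_nonneg_nonneg pos) simp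
  have sv: "summable v"
  proof (rule summable_comparison_test'[where g="\<lambda>j. M * (1/2)^j" and N=0])
    show "summable (\<lambda>j. M * (1/2::real)^j)" by (intro summable_mult summable_geometric) simp
    fix n :: nat
    show "norm (v n) \<le> M * (1/2)^n"
      using bnd[of n] by (simp add: v_def mult.commute mult_left_mono)
  qed
  have "v = (\<lambda>j. ((1/2::real)^j) *\<^sub>R w j)" by (rule ext) (simp add: v_def)
  then have zv: "z = suminf v" by (simp add: z_def)
  have z0: "0 \<le> z" unfolding zv by (rule suminf_nonneg_bl[OF sv v0])
  then show "0 \<le> z" .
  have zge: "v m \<le> z" for m
  proof -
    have "suminf v = suminf (\<lambda>n. v (n + Suc m)) + (\<Sum>i<Suc m. v i)"
      by (rule suminf_split_initial_segment[OF sv])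
    moreover have "0 \<le> suminf (\<lambda>n. v (n + Suc m))"
      by (rule suminf_nonneg_bl[OF summable_ignore_initial_segment[OF sv]]) (rule v0)
    moreover have "v m \<le> (\<Sum>i<Suc m. v i)"
      using sum_nonneg[of "{..<m}" v] v0 by simp
    ultimately show ?thesis unfolding zv by (metis add_increasing)
  qed
  have s0: "0 \<le> s k" for k unfolding s_def by (intro sum_nonneg pos)
  have sge: "w j \<le> s k" if "j < k" for j k
  proof -
    have "s k = w j + sum w ({..<k} - {j})" unfolding s_def
      using that by (subst sum.remove[of _ j]) auto
    moreover have "0 \<le> sum w ({..<k} - {j})" by (intro sum_nonneg pos)
    ultimately show ?thesis by simp
  qed
  define st where "st k = (4^k) *\<^sub>R s k + ((1/2::real)^k) *\<^sub>R z" for k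
  have st0: "0 \<le> st k" for k
    unfolding st_def using s0 z0 by (intro add_nonneg_nonneg scaleR_nonneg_nonneg) simp_all
  have yst: "y k = pprt (w k - st k)" for k by (simp add: y_def st_def)
  show y0: "0 \<le> y k" for k by (simp add: yst)
  show yw: "y k \<le> w k" for k
  proof -
    have "pprt (w k - st k) \<le> pprt (w k)" using st0[of k] by (intro pprt_mono) simp
    then show ?thesis using pos[of k] by (simp add: yst)
  qed
  have wy: "w k - y k = inf (w k) (st k)" for k
  proof -
    have "y k = w k - inf (w k) (st k)" unfolding yst by (rule diff_inf_pprt[symmetric])
    then show ?thesis by simp
  qed
  show "w k - y k \<le> (4^k) *\<^sub>R s k + ((1/2)^k) *\<^sub>R z" for k
    unfolding wy st_def by (rule inf_le2)
  show "w k - y k \<le> inf (w k) ((4^k) *\<^sub>R s k) + ((1/2)^k) *\<^sub>R z" for k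
    unfolding wy st_def using z0 by (intro inf_add_le scaleR_nonneg_nonneg) simp_all
  have dis_lt: "inf (y j) (y k) = 0" if jk: "j < k" for j k
  proof -
    have "y k \<le> pprt (w k - (4^k) *\<^sub>R w j)"
    proof -
      have "(4^k) *\<^sub>R w j \<le> (4^k) *\<^sub>R s k" using sge[OF jk] by (intro scaleR_left_mono) simp_all
      also have "\<dots> \<le> st k" unfolding st_def using z0 by (simp add: scaleR_nonneg_nonneg)
      finally show ?thesis unfolding yst by (intro pprt_mono) simp
    qed
    moreover have "y j \<le> pprt (w j - ((1/2)^j * (1/2)^k) *\<^sub>R w k)"
    proof -
      have "((1/2::real)^j * (1/2)^k) *\<^sub>R w k = ((1/2)^j) *\<^sub>R v k" by (simp add: v_def)
      also have "\<dots> \<le> ((1/2)^j) *\<^sub>R z" using zge[of k] by (intro scaleR_left_mono) simp_all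
      also have "\<dots> \<le> st j" unfolding st_def using s0[of j] by (simp add: scaleR_nonneg_nonneg)
      finally show ?thesis unfolding yst by (intro pprt_mono) simp
    qed
    moreover have "inf (pprt (w k - (4^k) *\<^sub>R w j)) (pprt (w j - ((1/2)^j * (1/2)^k) *\<^sub>R w k)) = 0"
    proof (rule disj_lemma[OF pos])
      show "0 \<le> (1/2::real)^j * (1/2)^k" by simp
      have "(4::real)^k * ((1/2)^j * (1/2)^k) = 2^k * (1/2)^j"
        by (simp add: power_mult_distrib[symmetric] mult.commute mult.left_commute)
      also have "\<dots> \<ge> 2^j * (1/2)^j"
        using jk by (intro mult_right_mono power_increasing) simp_all
      finally show "1 \<le> (4::real)^k * ((1/2)^j * (1/2)^k)" by (simp add: power_mult_distrib[symmetric])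
    qed
    ultimately have "inf (y j) (y k) \<le> 0"
      by (metis inf_commute inf_mono)
    then show ?thesis using y0[of j] y0[of k] by (simp add: antisym)
  qed
  show "inf (y j) (y k) = 0" if "j \<noteq> k" for j k
    using that dis_lt[of j k] dis_lt[of k j] by (cases "j < k") (simp_all add: inf_commute)
qed


lemma mono_tendsto_SUP:
  fixes f :: "real \<Rightarrow> real"
  assumes mono: "\<And>s t. 0 \<le> s \<Longrightarrow> s \<le> t \<Longrightarrow> f s \<le> f t" and bnd: "\<And>t. 0 \<le> t \<Longrightarrow> f t \<le> B"
  shows "(f \<longlongrightarrow> (SUP t\<in>{0..}. f t)) at_top"
proof (rule order_tendstoI)
  have ne: "{0::real..} \<noteq> {}" by auto
  have bdd: "bdd_above (f ` {0..})" using bnd by (intro bdd_aboveI[of _ B]) auto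
  fix a assume "a < (SUP t\<in>{0..}. f t)"
  then obtain t0 where t0: "t0 \<in> {0..}" "a < f t0" using less_cSUP_iff[OF ne bdd] by blast
  show "\<forall>\<^sub>F t in at_top. a < f t"
    using eventually_ge_at_top[of t0] by eventually_elim (use t0 mono in force)
next
  have bdd: "bdd_above (f ` {0..})" using bnd by (intro bdd_aboveI[of _ B]) auto
  fix a assume a: "(SUP t\<in>{0..}. f t) < a"
  show "\<forall>\<^sub>F t in at_top. f t < a"
    using eventually_ge_at_top[of 0] by eventually_elim (use a cSUP_upper[OF _ bdd] in force)
qed

lemma summable_tail_zero:
  fixes f :: "nat \<Rightarrow> real"
  assumes "summable f" shows "(\<lambda>m. suminf (\<lambda>i. f (i + m))) \<longlonglongrightarrow> 0"
proof -
  have "(\<lambda>m. suminf f - (\<Sum>i<m. f i)) \<longlonglongrightarrow> suminf f - suminf f"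
    by (intro tendsto_diff tendsto_const summable_LIMSEQ[OF assms])
  moreover have "suminf (\<lambda>i. f (i + m)) = suminf f - (\<Sum>i<m. f i)" for m
    using suminf_split_initial_segment[OF assms, of m] by simp
  ultimately show ?thesis by simp
qed

lemma oc_disjoint_contra:
  fixes y :: "nat \<Rightarrow> 'a::banach_lattice" and p :: "'a \<Rightarrow>\<^sub>L real"
  assumes oc: "dual_order_continuous TYPE('a)"
    and pos: "\<And>k. 0 \<le> y k" and dis: "\<And>j k. j \<noteq> k \<Longrightarrow> inf (y j) (y k) = 0"
    and bnd: "\<And>k. norm (y k) \<le> M"
    and p: "dual_le 0 p" and c: "0 < c" and freq: "\<And>m. \<exists>j\<ge>m. c \<le> blinfun_apply p (y j)"
  shows False
proof -
  let ?p = "blinfun_apply p"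
  have pmono: "?p a \<le> ?p b" if "a \<le> b" for a b using posf_mono[OF p that] .
  have ppos: "0 \<le> ?p a" if "0 \<le> a" for a using p that by (simp add: pos_dual)
  define phi where "phi j x t = ?p (inf x (t *\<^sub>R y j))" for j x and t :: real
  define C where "C j x = (SUP t\<in>{0..}. phi j x t)" for j x
  have phi_mono: "phi j x s \<le> phi j x t" if "0 \<le> s" "s \<le> t" for j x s t
    unfolding phi_def using that pos[of j] by (intro pmono inf_mono scaleR_right_mono) simp_all
  have phi_le: "phi j x t \<le> ?p x" for j x t
    unfolding phi_def by (intro pmono) simp
  have phi0: "0 \<le> phi j x t" if "0 \<le> x" "0 \<le> t" for j x t
    unfolding phi_def using that pos[of j] by (intro ppos le_infI scaleR_nonneg_nonneg) simp_all
  have bddC: "bdd_above ((phi j x) ` {0..})" for j x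
    using phi_le by (intro bdd_aboveI[of _ "?p x"]) auto
  have C_ge: "phi j x t \<le> C j x" if "0 \<le> t" for j x t
    unfolding C_def using that by (intro cSUP_upper bddC) simp
  have C_le: "C j x \<le> B" if "\<And>t. 0 \<le> t \<Longrightarrow> phi j x t \<le> B" for j x B
    unfolding C_def using that by (intro cSUP_least) auto
  have C_lim: "((phi j x) \<longlongrightarrow> C j x) at_top" for j x
    unfolding C_def by (rule mono_tendsto_SUP[OF phi_mono phi_le])
  have C0: "0 \<le> C j x" if "0 \<le> x" for j x using C_ge[of 0 j x] phi0[OF that, of 0 j] by simp
  have Cp: "C j x \<le> ?p x" for j x by (intro C_le phi_le)
  have Cadd: "C j (a + b) = C j a + C j b" if a: "0 \<le> a" and b: "0 \<le> b" for j a b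
  proof (rule antisym)
    have "eventually (\<lambda>t. phi j (a + b) t \<le> phi j a t + phi j b t) at_top"
      using eventually_ge_at_top[of 0]
    proof eventually_elim
      case (elim t)
      have "inf (a + b) (t *\<^sub>R y j) \<le> inf a (t *\<^sub>R y j) + inf b (t *\<^sub>R y j)"
        using a b elim pos[of j] by (intro riesz_ineq scaleR_nonneg_nonneg) simp_all
      then have "?p (inf (a + b) (t *\<^sub>R y j)) \<le> ?p (inf a (t *\<^sub>R y j) + inf b (t *\<^sub>R y j))"
        by (rule pmono)
      then show ?case unfolding phi_def by (simp add: blinfun.add_right)
    qed
    then show "C j (a + b) \<le> C j a + C j b"
      by (rule tendsto_le[OF _ tendsto_add[OF C_lim C_lim] C_lim, rotated]) simp
    have "eventually (\<lambda>t. phi j a t + phi j b t \<le> C j (a + b)) at_top"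
      using eventually_ge_at_top[of 0]
    proof eventually_elim
      case (elim t)
      have "inf a (t *\<^sub>R y j) + inf b (t *\<^sub>R y j) \<le> inf (a + b) ((2 * t) *\<^sub>R y j)"
      proof (rule le_infI)
        show "inf a (t *\<^sub>R y j) + inf b (t *\<^sub>R y j) \<le> a + b" by (intro add_mono) simp_all
        have "inf a (t *\<^sub>R y j) + inf b (t *\<^sub>R y j) \<le> t *\<^sub>R y j + t *\<^sub>R y j" by (intro add_mono) simp_all
        also have "\<dots> = (2 * t) *\<^sub>R y j" by (simp add: scaleR_add_left[symmetric])
        finally show "inf a (t *\<^sub>R y j) + inf b (t *\<^sub>R y j) \<le> (2 * t) *\<^sub>R y j" .
      qed
      then have "?p (inf a (t *\<^sub>R y j) + inf b (t *\<^sub>R y j)) \<le> ?p (inf (a + b) ((2 * t) *\<^sub>R y j))"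
        by (rule pmono)
      then have "phi j a t + phi j b t \<le> phi j (a + b) (2 * t)"
        unfolding phi_def by (simp add: blinfun.add_right)
      also have "\<dots> \<le> C j (a + b)" using elim by (intro C_ge) simp
      finally show ?case .
    qed
    then show "C j a + C j b \<le> C j (a + b)"
      by (rule tendsto_le[OF _ tendsto_const tendsto_add[OF C_lim C_lim], rotated]) simp
  qed
  have Chom: "C j (r *\<^sub>R a) = r * C j a" if r: "0 \<le> r" and a: "0 \<le> a" for j r a
  proof (cases "r = 0")
    case True
    have "phi j 0 t = 0" if "0 \<le> t" for t
    proof -
      have "inf 0 (t *\<^sub>R y j) = 0" using that pos[of j] by (simp add: inf_absorb1 scaleR_nonneg_nonneg)
      then show ?thesis by (simp add: phi_def)
    qed
    then have "C j 0 \<le> 0" by (intro C_le) simp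
    then have "C j 0 = 0" using C0[of 0 j] by simp
    then show ?thesis using True by simp
  next
    case False
    then have r': "0 < r" using r by simp
    have sc: "phi j (r *\<^sub>R a) t = r * phi j a (t / r)" for t
    proof -
      have "inf (r *\<^sub>R a) (t *\<^sub>R y j) = r *\<^sub>R inf a ((t / r) *\<^sub>R y j)"
        using r' by (simp add: scaleR_inf_pos[OF r])
      then show ?thesis by (simp add: phi_def blinfun.scaleR_right)
    qed
    show ?thesis
    proof (rule antisym)
      show "C j (r *\<^sub>R a) \<le> r * C j a"
      proof (rule C_le)
        fix t :: real assume "0 \<le> t"
        then have "phi j a (t / r) \<le> C j a" using r' by (intro C_ge) simp
        then show "phi j (r *\<^sub>R a) t \<le> r * C j a" unfolding sc using r by (rule mult_left_mono)
      qed
      have "C j a \<le> C j (r *\<^sub>R a) / r"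
      proof (rule C_le)
        fix t :: real assume t: "0 \<le> t"
        have "r * phi j a t = phi j (r *\<^sub>R a) (r * t)" unfolding sc using r' by simp
        also have "\<dots> \<le> C j (r *\<^sub>R a)" using t r by (intro C_ge) simp
        finally show "phi j a t \<le> C j (r *\<^sub>R a) / r" using r' by (simp add: field_simps)
      qed
      then show "r * C j a \<le> C j (r *\<^sub>R a)" using r' by (simp add: field_simps)
    qed
  qed
  have Csum: "(\<Sum>i<N. C (m + i) x) \<le> ?p x" if x: "0 \<le> x" for m N x
  proof -
    have "((\<lambda>t. \<Sum>i<N. phi (m + i) x t) \<longlongrightarrow> (\<Sum>i<N. C (m + i) x)) at_top"
      by (intro tendsto_sum C_lim)
    moreover have "eventually (\<lambda>t. (\<Sum>i<N. phi (m + i) x t) \<le> ?p x) at_top"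
      using eventually_ge_at_top[of 0]
    proof eventually_elim
      case (elim t)
      define w where "w i = inf x (t *\<^sub>R y (m + i))" for i
      have w0: "0 \<le> w i" for i unfolding w_def using x elim pos by (simp add: scaleR_nonneg_nonneg)
      have wx: "w i \<le> x" for i by (simp add: w_def)
      have wd: "inf (w i) (w k) = 0" if "i \<noteq> k" for i k
      proof (rule antisym)
        have "inf (w i) (w k) \<le> inf (t *\<^sub>R y (m + i)) (t *\<^sub>R y (m + k))"
          by (simp add: w_def le_infI1 le_infI2 inf.coboundedI2)
        also have "\<dots> = t *\<^sub>R inf (y (m + i)) (y (m + k))" using elim by (simp add: scaleR_inf_pos)
        also have "\<dots> = 0" using dis[of "m + i" "m + k"] that by simp
        finally show "inf (w i) (w k) \<le> 0" .
        show "0 \<le> inf (w i) (w k)" using w0 by simp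
      qed
      have "(\<Sum>i<N. phi (m + i) x t) = ?p (\<Sum>i<N. w i)"
        by (simp add: phi_def w_def blinfun.sum_right)
      also have "\<dots> \<le> ?p x" by (intro pmono sum_disjoint_le[OF w0 wd wx])
      finally show ?case .
    qed
    ultimately show ?thesis by (rule tendsto_le[OF _ tendsto_const, rotated]) simp
  qed
  have summ: "summable (\<lambda>i. C (m + i) x)" if x: "0 \<le> x" for m x
    by (rule summableI_nonneg_bounded[where x="?p x"]) (simp_all add: C0[OF x] Csum[OF x])
  define rho where "rho m x = suminf (\<lambda>i. C (m + i) x)" for m x
  have rho_add: "rho m (a + b) = rho m a + rho m b" if "0 \<le> a" "0 \<le> b" for m a b
    unfolding rho_def using that by (simp add: Cadd suminf_add[OF summ summ])
  have rho_hom: "rho m (r *\<^sub>R a) = r * rho m a" if "0 \<le> r" "0 \<le> a" for m r a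
    unfolding rho_def using that by (simp add: Chom suminf_mult[OF summ])
  have rho_bnd: "0 \<le> rho m a \<and> rho m a \<le> norm p * norm a" if a: "0 \<le> a" for m a
  proof
    show "0 \<le> rho m a" unfolding rho_def using a by (intro suminf_nonneg summ C0)
    have "rho m a \<le> ?p a" unfolding rho_def using a by (intro suminf_le_const summ Csum)
    also have "\<dots> \<le> norm p * norm a" using norm_blinfun[of p a] by simp
    finally show "rho m a \<le> norm p * norm a" .
  qed
  have "\<forall>m. \<exists>g. dual_le 0 g \<and> (\<forall>a. 0 \<le> a \<longrightarrow> blinfun_apply g a = rho m a)"
    using ext_pos[of "rho m" "norm p" for m] rho_add rho_hom rho_bnd by blast
  from choice[OF this] obtain R where RR: "\<forall>m. dual_le 0 (R m) \<and> (\<forall>a. 0 \<le> a \<longrightarrow> blinfun_apply (R m) a = rho m a)"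
    by blast
  have R: "\<And>m. dual_le 0 (R m)" using RR by blast
  have Ra: "\<And>m a. 0 \<le> a \<Longrightarrow> blinfun_apply (R m) a = rho m a" using RR by blast
  have rho_anti: "rho m' a \<le> rho m a" if "m \<le> m'" "0 \<le> a" for m m' a
  proof -
    define k where "k = m' - m"
    have k: "m' = m + k" using that(1) by (simp add: k_def)
    have "rho m a = suminf (\<lambda>i. C (m + (i + k)) a) + (\<Sum>i<k. C (m + i) a)"
      unfolding rho_def by (rule suminf_split_initial_segment[OF summ[OF that(2)]])
    moreover have "suminf (\<lambda>i. C (m + (i + k)) a) = rho m' a"
      unfolding rho_def k by (simp add: add.commute add.left_commute)
    moreover have "0 \<le> (\<Sum>i<k. C (m + i) a)" using that(2) by (intro sum_nonneg C0)
    ultimately show ?thesis by simp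
  qed
  define D where "D = range R"
  have "(INF f\<in>D. norm f) = 0"
    using oc unfolding dual_order_continuous_def
  proof (elim allE impE)
    show "D \<noteq> {} \<and> (\<forall>f\<in>D. \<forall>g\<in>D. \<exists>h\<in>D. dual_le h f \<and> dual_le h g) \<and> (\<forall>f\<in>D. dual_le 0 f)
      \<and> (\<forall>h. (\<forall>f\<in>D. dual_le h f) \<longrightarrow> dual_le h 0)"
    proof (intro conjI ballI allI impI)
      show "D \<noteq> {}" by (simp add: D_def)
    next
      fix f g assume "f \<in> D" "g \<in> D"
      then obtain m m' where fg: "f = R m" "g = R m'" by (auto simp: D_def)
      show "\<exists>h\<in>D. dual_le h f \<and> dual_le h g"
        by (rule bexI[of _ "R (max m m')"])
           (auto simp: D_def fg dual_le_def Ra intro: rho_anti)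
    next
      fix f assume "f \<in> D" then show "dual_le 0 f" using R by (auto simp: D_def)
    next
      fix h assume h: "\<forall>f\<in>D. dual_le h f"
      show "dual_le h 0" unfolding dual_le_def
      proof (intro allI impI)
        fix x :: 'a assume x: "0 \<le> x"
        have "blinfun_apply h x \<le> rho m x" for m
        proof -
          have "dual_le h (R m)" using h by (simp add: D_def)
          then have "blinfun_apply h x \<le> blinfun_apply (R m) x" using x by (simp add: dual_le_def)
          then show ?thesis using Ra[OF x, of m] by simp
        qed
        moreover have "(\<lambda>m. rho m x) \<longlonglongrightarrow> 0"
        proof -
          have "summable (\<lambda>i. C i x)" using summ[OF x, of 0] by simp
          then have "(\<lambda>m. suminf (\<lambda>i. C (i + m) x)) \<longlonglongrightarrow> 0" by (rule summable_tail_zero)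
          then show ?thesis by (simp add: rho_def add.commute)
        qed
        ultimately have "blinfun_apply h x \<le> 0" by (intro LIMSEQ_le_const[of "\<lambda>m. rho m x" 0]) auto
        then show "blinfun_apply h x \<le> blinfun_apply 0 x" by simp
      qed
    qed
  qed
  moreover have "c / max M 1 \<le> (INF f\<in>D. norm f)"
  proof (rule cINF_greatest)
    show "D \<noteq> {}" by (simp add: D_def)
    fix f assume "f \<in> D"
    then obtain m where f: "f = R m" by (auto simp: D_def)
    obtain j where j: "j \<ge> m" "c \<le> ?p (y j)" using freq by blast
    define i where "i = j - m"
    have i: "j = m + i" using j(1) by (simp add: i_def)
    have "c \<le> phi j (y j) 1" using j by (simp add: phi_def)
    also have "\<dots> \<le> C j (y j)" by (intro C_ge) simp
    also have "\<dots> \<le> rho m (y j)"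
    proof -
      have "sum (\<lambda>i. C (m + i) (y j)) {i} \<le> suminf (\<lambda>i. C (m + i) (y j))"
        using pos[of j] by (intro sum_le_suminf summ C0) auto
      then show ?thesis by (simp add: rho_def i)
    qed
    also have "\<dots> = blinfun_apply f (y j)" using Ra[OF pos[of j]] by (simp add: f)
    also have "\<dots> \<le> norm f * norm (y j)" using norm_blinfun[of f "y j"] by simp
    also have "\<dots> \<le> norm f * max M 1" using bnd[of j] by (intro mult_left_mono) auto
    finally show "c / max M 1 \<le> norm f" by (simp add: divide_le_eq)
  qed
  ultimately show False using c by (simp add: divide_le_0_iff)
qed


lemma not_tendsto_freq:
  fixes X :: "nat \<Rightarrow> 'b::real_normed_vector"
  assumes "\<not> X \<longlonglongrightarrow> 0"
  obtains r where "0 < r" "\<And>N. \<exists>n\<ge>N. r \<le> norm (X n)"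
proof -
  have "\<not> (\<forall>r>0. \<exists>no. \<forall>n\<ge>no. norm (X n - 0) < r)" using assms unfolding LIMSEQ_iff .
  then obtain r where "0 < r" "\<forall>no. \<exists>n\<ge>no. \<not> norm (X n) < r" by auto
  then show ?thesis using that[of r] by (auto simp: not_less)
qed

lemma tendsto_eventually_small:
  fixes X :: "nat \<Rightarrow> 'b::real_normed_vector"
  assumes "X \<longlonglongrightarrow> 0" "0 < r"
  obtains N where "\<And>n. n \<ge> N \<Longrightarrow> norm (X n) < r"
proof -
  from assms have "\<exists>no. \<forall>n\<ge>no. norm (X n - 0) < r" unfolding LIMSEQ_iff by blast
  then show ?thesis using that by auto
qed

lemma oc_uaw_pos_null:
  fixes x :: "nat \<Rightarrow> 'a::banach_lattice" and p :: "'a \<Rightarrow>\<^sub>L real"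
  assumes oc: "dual_order_continuous TYPE('a)" and bx: "bounded (range x)"
    and ux: "uaw_null x" and p: "dual_le 0 p"
  shows "(\<lambda>n. blinfun_apply p (labs (x n))) \<longlonglongrightarrow> 0"
proof (rule ccontr)
  assume nt: "\<not> ?thesis"
  let ?p = "blinfun_apply p"
  have pmono: "?p u \<le> ?p v" if "u \<le> v" for u v using posf_mono[OF p that] .
  define a where "a n = labs (x n)" for n
  have a0: "0 \<le> a n" for n by (simp add: a_def labs_nonneg)
  obtain M where M: "\<And>n. norm (x n) \<le> M" using bx unfolding bounded_iff by auto
  have aM: "norm (a n) \<le> M" for n using M by (simp add: a_def norm_labs)
  have pa0: "0 \<le> ?p (a n)" for n using p a0 by (simp add: pos_dual)
  have uw: "(\<lambda>n. ?p (inf (a n) u)) \<longlonglongrightarrow> 0" if "0 \<le> u" for u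
    using ux that unfolding uaw_null_def weakly_null_def a_def by blast
  obtain c where c: "0 < c" and freq: "\<And>N. \<exists>n\<ge>N. c \<le> norm (?p (a n))"
    using not_tendsto_freq[of "\<lambda>n. ?p (a n)"] nt unfolding a_def by blast
  have sel: "\<exists>n. c \<le> ?p (a n) \<and> ?p (inf (a n) u) < c/4" if u0: "0 \<le> u" for u
  proof -
    obtain N where N: "\<And>n. n \<ge> N \<Longrightarrow> norm (?p (inf (a n) u)) < c/4"
      using tendsto_eventually_small[OF uw[OF u0], of "c/4"] c by auto
    obtain n where "n \<ge> N" "c \<le> norm (?p (a n))" using freq by blast
    then show ?thesis using N[of n] pa0[of n] by (intro exI[of _ n]) auto
  qed
  define SEL where "SEL u = (SOME n. c \<le> ?p (a n) \<and> ?p (inf (a n) u) < c/4)" for u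
  define S where "S = rec_nat 0 (\<lambda>k s. s + a (SEL (((4::real)^k) *\<^sub>R s)))"
  have S0: "S 0 = 0" by (simp add: S_def)
  have SS: "S (Suc k) = S k + a (SEL (((4::real)^k) *\<^sub>R S k))" for k by (simp add: S_def)
  define w where "w k = a (SEL (((4::real)^k) *\<^sub>R S k))" for k
  have Sw: "S k = sum w {..<k}" for k by (induction k) (simp_all add: S0 SS w_def)
  have w0: "0 \<le> w k" for k by (simp add: w_def a0)
  have wM: "norm (w k) \<le> M" for k by (simp add: w_def aM)
  have Spos: "0 \<le> S k" for k unfolding Sw by (intro sum_nonneg w0)
  have wprop: "c \<le> ?p (w k) \<and> ?p (inf (w k) (((4::real)^k) *\<^sub>R S k)) < c/4" for k
  proof -
    have "0 \<le> ((4::real)^k) *\<^sub>R S k" using Spos by (intro scaleR_nonneg_nonneg) simp_all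
    from someI_ex[OF sel[OF this]] show ?thesis by (simp add: w_def SEL_def)
  qed
  define s where "s = (\<lambda>k. sum w {..<k})"
  define z where "z = suminf (\<lambda>j. ((1/2::real)^j) *\<^sub>R w j)"
  define y where "y = (\<lambda>k. pprt (w k - (((4::real)^k) *\<^sub>R s k + ((1/2::real)^k) *\<^sub>R z)))"
  note DJ = disjointify[OF w0 wM s_def z_def y_def]
  have sS: "s k = S k" for k by (simp add: s_def Sw)
  have py: "3 * c / 4 - (1/2)^k * ?p z \<le> ?p (y k)" for k
  proof -
    have "?p (w k - y k) \<le> ?p (inf (w k) (((4::real)^k) *\<^sub>R s k) + ((1/2::real)^k) *\<^sub>R z)"
      by (rule pmono[OF DJ(5)])
    also have "\<dots> = ?p (inf (w k) (((4::real)^k) *\<^sub>R S k)) + (1/2)^k * ?p z"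
      by (simp add: sS blinfun.add_right blinfun.scaleR_right)
    finally have "?p (w k) - ?p (y k) \<le> ?p (inf (w k) (((4::real)^k) *\<^sub>R S k)) + (1/2)^k * ?p z"
      by (simp add: blinfun.diff_right)
    then show ?thesis using wprop[of k] by linarith
  qed
  have "(\<lambda>k. (1/2::real)^k * ?p z) \<longlonglongrightarrow> 0"
    by (intro tendsto_mult_left_zero LIMSEQ_realpow_zero) simp_all
  then obtain K where K: "\<And>k. k \<ge> K \<Longrightarrow> norm ((1/2::real)^k * ?p z) < c/4"
    using tendsto_eventually_small[of "\<lambda>k. (1/2::real)^k * ?p z" "c/4"] c by auto
  have freqy: "\<exists>j\<ge>m. c/2 \<le> ?p (y j)" for m
  proof (intro exI[of _ "max m K"] conjI)
    show "m \<le> max m K" by simp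
    have "norm ((1/2::real)^(max m K) * ?p z) < c/4" by (rule K) simp
    then show "c/2 \<le> ?p (y (max m K))" using py[of "max m K"] by (simp add: abs_less_iff)
  qed
  have yM: "norm (y k) \<le> M" for k
    using norm_mono_pos[OF DJ(2) DJ(3)] wM[of k] by (rule order_trans)
  have c2: "0 < c / 2" using c by simp
  show False
    by (rule oc_disjoint_contra[OF oc DJ(2) DJ(4) yM p c2 freqy])
qed

lemma oc_uaw_weakly_null:
  fixes x :: "nat \<Rightarrow> 'a::banach_lattice"
  assumes oc: "dual_order_continuous TYPE('a)" and bx: "bounded (range x)" and ux: "uaw_null x"
  shows "weakly_null x"
  unfolding weakly_null_def
proof
  fix g :: "'a \<Rightarrow>\<^sub>L real"
  obtain p q where p: "dual_le 0 p" and q: "dual_le 0 q" and g: "g = p - q"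
    using pos_decomp by blast
  have lim: "(\<lambda>n. blinfun_apply r (x n)) \<longlonglongrightarrow> 0" if r: "dual_le 0 r" for r
  proof (rule Lim_null_comparison)
    show "\<forall>\<^sub>F n in sequentially. norm (blinfun_apply r (x n)) \<le> blinfun_apply r (labs (x n))"
      using posf_abs[OF r] by simp
    show "(\<lambda>n. blinfun_apply r (labs (x n))) \<longlonglongrightarrow> 0" by (rule oc_uaw_pos_null[OF oc bx ux r])
  qed
  show "(\<lambda>n. blinfun_apply g (x n)) \<longlonglongrightarrow> 0"
    using tendsto_diff[OF lim[OF p] lim[OF q]] by (simp add: g blinfun.diff_left)
qed


lemma not_oc_witness:
  assumes noc: "\<not> dual_order_continuous TYPE('a::banach_lattice)"
  shows "\<exists>(f0 :: 'a \<Rightarrow>\<^sub>L real) (y :: nat \<Rightarrow> 'a). dual_le 0 f0 \<and> bounded (range y) \<and> uaw_null y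
           \<and> \<not> (\<lambda>k. blinfun_apply f0 (y k)) \<longlonglongrightarrow> 0"
proof -
  from noc obtain D :: "('a \<Rightarrow>\<^sub>L real) set" where ne: "D \<noteq> {}"
    and dir: "\<forall>f\<in>D. \<forall>g\<in>D. \<exists>h\<in>D. dual_le h f \<and> dual_le h g"
    and pos: "\<forall>f\<in>D. dual_le 0 f"
    and inf0: "\<forall>h. (\<forall>f\<in>D. dual_le h f) \<longrightarrow> dual_le h 0"
    and INFne: "(INF f\<in>D. norm f) \<noteq> 0"
    unfolding dual_order_continuous_def by blast
  define d where "d = (INF f\<in>D. norm f)"
  have bddD: "bdd_below ((\<lambda>f. norm f) ` D)" by (intro bdd_belowI[of _ 0]) auto
  have d0: "0 \<le> d" unfolding d_def using ne by (intro cINF_greatest) simp_all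
  then have dp: "0 < d" using INFne d_def by simp
  have nD: "d \<le> norm f" if "f \<in> D" for f unfolding d_def using bddD that by (rule cINF_lower)
  obtain f0 where f0: "f0 \<in> D" using ne by blast
  have f0p: "dual_le 0 f0" using pos f0 by blast
  define P where "P k s fx \<longleftrightarrow> fst fx \<in> D \<and> dual_le (fst fx) f0
      \<and> (4::real)^k * blinfun_apply (fst fx) s < d/8 \<and> 0 \<le> snd fx \<and> norm (snd fx) \<le> 1
      \<and> d/2 < blinfun_apply (fst fx) (snd fx)" for k s and fx :: "('a \<Rightarrow>\<^sub>L real) \<times> 'a"
  have sel: "\<exists>fx. P k s fx" if s: "0 \<le> s" for s k
  proof -
    have e: "0 < d / 8 / 4^k" using dp by simp
    obtain f' where f': "f' \<in> D" "blinfun_apply f' s < d / 8 / 4^k"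
      using dir_inf_pointwise[OF ne dir pos inf0 s e] by blast
    obtain h where h: "h \<in> D" "dual_le h f'" "dual_le h f0" using dir f' f0 by blast
    have hs: "blinfun_apply h s \<le> blinfun_apply f' s" using h(2) s by (simp add: dual_le_def)
    have hp: "dual_le 0 h" using pos h by blast
    have "d / 2 < norm h" using nD[OF h(1)] dp by simp
    then obtain xx where xx: "0 \<le> xx" "norm xx \<le> 1" "d/2 < blinfun_apply h xx"
      using posf_witness[OF hp, of "d/2"] dp by auto
    have "blinfun_apply h s < d / 8 / 4^k" using hs f'(2) by simp
    then have "(4::real)^k * blinfun_apply h s < d/8" by (simp add: field_simps)
    then show ?thesis using h xx unfolding P_def by (intro exI[of _ "(h, xx)"]) simp
  qed
  define SEL where "SEL k s = (SOME fx. P k s fx)" for k s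
  define S where "S = rec_nat 0 (\<lambda>k s. s + snd (SEL k s))"
  have S0: "S 0 = 0" by (simp add: S_def)
  have SS: "S (Suc k) = S k + snd (SEL k (S k))" for k by (simp add: S_def)
  have SP: "0 \<le> S k \<and> P k (S k) (SEL k (S k))" for k
  proof (induction k)
    case 0
    then show ?case using someI_ex[OF sel[of 0 0]] by (simp add: S0 SEL_def)
  next
    case (Suc k)
    then have "0 \<le> snd (SEL k (S k))" by (simp add: P_def)
    then have S1: "0 \<le> S (Suc k)" using Suc SS by simp
    show ?case using S1 someI_ex[OF sel[OF S1, of "Suc k"]] by (simp add: SEL_def)
  qed
  define w where "w k = snd (SEL k (S k))" for k
  define F where "F k = fst (SEL k (S k))" for k
  have Sw: "S k = sum w {..<k}" for k by (induction k) (simp_all add: S0 SS w_def)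
  have w0: "0 \<le> w k" and w1: "norm (w k) \<le> 1" and FD: "F k \<in> D" and Ff0: "dual_le (F k) f0"
    and Fs: "(4::real)^k * blinfun_apply (F k) (S k) < d/8" and Fw: "d/2 < blinfun_apply (F k) (w k)" for k
    using SP[of k] by (simp_all add: P_def w_def F_def)
  have Fp: "dual_le 0 (F k)" for k using pos FD by blast
  define s where "s = (\<lambda>k. sum w {..<k})"
  define z where "z = suminf (\<lambda>j. ((1/2::real)^j) *\<^sub>R w j)"
  define y where "y = (\<lambda>k. pprt (w k - (((4::real)^k) *\<^sub>R s k + ((1/2::real)^k) *\<^sub>R z)))"
  note DJ = disjointify[OF w0 w1 s_def z_def y_def]
  have sS: "s k = S k" for k by (simp add: s_def Sw)
  have py: "3 * d / 8 - (1/2)^k * blinfun_apply f0 z \<le> blinfun_apply f0 (y k)" for k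
  proof -
    have "blinfun_apply (F k) (w k - y k) \<le> blinfun_apply (F k) (((4::real)^k) *\<^sub>R s k + ((1/2::real)^k) *\<^sub>R z)"
      by (rule posf_mono[OF Fp DJ(6)])
    also have "\<dots> = (4::real)^k * blinfun_apply (F k) (S k) + (1/2)^k * blinfun_apply (F k) z"
      by (simp add: sS blinfun.add_right blinfun.scaleR_right)
    also have "blinfun_apply (F k) z \<le> blinfun_apply f0 z" using Ff0 DJ(1) by (simp add: dual_le_def)
    then have "(1/2::real)^k * blinfun_apply (F k) z \<le> (1/2)^k * blinfun_apply f0 z"
      by (intro mult_left_mono) simp_all
    then have "(4::real)^k * blinfun_apply (F k) (S k) + (1/2)^k * blinfun_apply (F k) z
       \<le> (4::real)^k * blinfun_apply (F k) (S k) + (1/2)^k * blinfun_apply f0 z" by simp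
    finally have "blinfun_apply (F k) (w k) - blinfun_apply (F k) (y k)
       \<le> (4::real)^k * blinfun_apply (F k) (S k) + (1/2)^k * blinfun_apply f0 z"
      by (simp add: blinfun.diff_right)
    moreover have "blinfun_apply (F k) (y k) \<le> blinfun_apply f0 (y k)" using Ff0 DJ(2) by (simp add: dual_le_def)
    ultimately show ?thesis using Fs[of k] Fw[of k] by linarith
  qed
  have "(\<lambda>k. (1/2::real)^k * blinfun_apply f0 z) \<longlonglongrightarrow> 0"
    by (intro tendsto_mult_left_zero LIMSEQ_realpow_zero) simp_all
  moreover have d8: "0 < d / 8" using dp by simp
  ultimately obtain K where K: "\<And>k. k \<ge> K \<Longrightarrow> norm ((1/2::real)^k * blinfun_apply f0 z) < d/8"
    using tendsto_eventually_small by blast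
  have big: "d/4 \<le> blinfun_apply f0 (y k)" if "k \<ge> K" for k
    using K[OF that] py[of k] by (simp add: abs_less_iff)
  have nt: "\<not> (\<lambda>k. blinfun_apply f0 (y k)) \<longlonglongrightarrow> 0"
  proof
    assume "(\<lambda>k. blinfun_apply f0 (y k)) \<longlonglongrightarrow> 0"
    moreover have "0 < d / 4" using dp by simp
    ultimately obtain N where N: "\<And>k. k \<ge> N \<Longrightarrow> norm (blinfun_apply f0 (y k)) < d/4"
      using tendsto_eventually_small by blast
    have "norm (blinfun_apply f0 (y (max N K))) < d/4" by (rule N) simp
    moreover have "d/4 \<le> blinfun_apply f0 (y (max N K))" by (rule big) simp
    ultimately show False by simp
  qed
  have by_: "bounded (range y)"
    unfolding bounded_iff
  proof (intro exI[of _ 1] ballI)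
    fix v assume "v \<in> range y"
    then obtain k where "v = y k" by blast
    then show "norm v \<le> 1" using norm_mono_pos[OF DJ(2) DJ(3), of k] w1[of k] by simp
  qed
  have uy: "uaw_null y" by (rule disjoint_uaw_null[OF DJ(2) DJ(4)])
  show ?thesis using f0p by_ uy nt by blast
qed


lemma compact_weakly_null:
  fixes T :: "'a::real_normed_vector \<Rightarrow> 'b::real_normed_vector"
  assumes T: "compact_op T" and bx: "bounded (range x)" and wx: "weakly_null x"
  shows "(\<lambda>n. T (x n)) \<longlonglongrightarrow> 0"
proof (rule ccontr)
  assume nt: "\<not> ?thesis"
  have blT: "bounded_linear T" and K: "compact (closure (T ` ball 0 1))"
    using T by (simp_all add: compact_op_def)
  have Tsc: "T (c *\<^sub>R u) = c *\<^sub>R T u" for c u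
    by (rule linear_cmul[OF bounded_linear.linear[OF blT]])
  obtain M where M: "\<And>n. norm (x n) \<le> M" using bx unfolding bounded_iff by auto
  have M0: "0 \<le> M" using M[of 0] norm_ge_zero order_trans by blast
  define L where "L = M + 1"
  have L: "0 < L" using M0 by (simp add: L_def)
  obtain e where e: "0 < e" and freq: "\<And>N. \<exists>n\<ge>N. e \<le> norm (T (x n))"
    using not_tendsto_freq[OF nt] by blast
  define I where "I = {n. e \<le> norm (T (x n))}"
  have infI: "infinite I" unfolding infinite_nat_iff_unbounded_le I_def using freq by blast
  define r where "r = enumerate I"
  have rmono: "strict_mono r" unfolding r_def by (rule strict_mono_enumerate[OF infI])
  have rI: "r n \<in> I" for n unfolding r_def by (rule enumerate_in_set[OF infI])
  define v where "v n = T ((1/L) *\<^sub>R x (r n))" for n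
  have vK: "v n \<in> closure (T ` ball 0 1)" for n
  proof -
    have "norm ((1/L) *\<^sub>R x (r n)) = norm (x (r n)) / L" using L by simp
    also have "\<dots> < 1" using M[of "r n"] L by (simp add: L_def divide_less_eq)
    finally have "(1/L) *\<^sub>R x (r n) \<in> ball 0 1" by simp
    then show ?thesis unfolding v_def by (intro closure_subset[THEN subsetD] imageI)
  qed
  obtain l r' where lK: "l \<in> closure (T ` ball 0 1)" and r': "strict_mono r'" and lim: "(v \<circ> r') \<longlonglongrightarrow> l"
    using compact_imp_seq_compact[OF K] vK unfolding seq_compact_def by metis
  have vn: "e / L \<le> norm (v n)" for n
  proof -
    have "norm (v n) = norm (T (x (r n))) / L" unfolding v_def Tsc using L by simp
    then show ?thesis using rI[of n] L by (simp add: I_def divide_right_mono)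
  qed
  have "e / L \<le> norm l"
    using tendsto_norm[OF lim] vn by (intro LIMSEQ_le_const[of "\<lambda>n. norm ((v \<circ> r') n)"]) auto
  then have l0: "l \<noteq> 0" using e L by (auto simp: divide_le_0_iff)
  obtain g :: "'b \<Rightarrow>\<^sub>L real" where g: "blinfun_apply g l = norm l"
    using hahn_banach_norming by blast
  have "(\<lambda>n. blinfun_apply g ((v \<circ> r') n)) \<longlonglongrightarrow> blinfun_apply g l"
    by (intro blinfun.tendsto lim tendsto_const)
  moreover have "(\<lambda>n. blinfun_apply g ((v \<circ> r') n)) \<longlonglongrightarrow> 0"
  proof -
    define gT where "gT = Blinfun (\<lambda>u. blinfun_apply g (T u))"
    have blgT: "bounded_linear (\<lambda>u. blinfun_apply g (T u))"
      by (rule bounded_linear_compose[OF blinfun.bounded_linear_right blT])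
    have gTa: "blinfun_apply gT u = blinfun_apply g (T u)" for u
      unfolding gT_def using blgT by (simp add: bounded_linear_Blinfun_apply)
    have "(\<lambda>n. blinfun_apply gT (x n)) \<longlonglongrightarrow> 0" using wx unfolding weakly_null_def by blast
    then have "((\<lambda>n. blinfun_apply gT (x n)) \<circ> (r \<circ> r')) \<longlonglongrightarrow> 0"
      by (rule LIMSEQ_subseq_LIMSEQ) (intro strict_mono_o rmono r')
    then have "(\<lambda>n. (1/L) * blinfun_apply gT (x (r (r' n)))) \<longlonglongrightarrow> 0"
      by (intro tendsto_mult_right_zero) (simp add: o_def)
    moreover have "blinfun_apply g ((v \<circ> r') n) = (1/L) * blinfun_apply gT (x (r (r' n)))" for n
      by (simp add: v_def gTa Tsc blinfun.scaleR_right)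
    ultimately show ?thesis by simp
  qed
  ultimately have "blinfun_apply g l = 0" by (rule LIMSEQ_unique)
  then show False using g l0 by simp
qed

lemma rank_one_ops:
  fixes f0 :: "'a::banach_lattice \<Rightarrow>\<^sub>L real" and e :: "'b::banach_lattice"
  assumes f0: "dual_le 0 f0" and e: "0 \<le> e"
  shows "positive_op (\<lambda>x. blinfun_apply f0 x *\<^sub>R e)"
    and "dunford_pettis_op (\<lambda>x. blinfun_apply f0 x *\<^sub>R e)"
    and "compact_op (\<lambda>x. blinfun_apply f0 x *\<^sub>R e)"
proof -
  have bl: "bounded_linear (\<lambda>x. blinfun_apply f0 x *\<^sub>R e)"
    by (rule bounded_linear_compose[OF bounded_linear_scaleR_left blinfun.bounded_linear_right])
  show "positive_op (\<lambda>x. blinfun_apply f0 x *\<^sub>R e)"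
    unfolding positive_op_def using f0 e by (auto simp: pos_dual intro: scaleR_nonneg_nonneg)
  show "dunford_pettis_op (\<lambda>x. blinfun_apply f0 x *\<^sub>R e)"
    unfolding dunford_pettis_op_def
  proof (intro conjI allI impI bl)
    fix x :: "nat \<Rightarrow> 'a" assume "weakly_null x"
    then have "(\<lambda>n. blinfun_apply f0 (x n)) \<longlonglongrightarrow> 0" unfolding weakly_null_def by blast
    then show "(\<lambda>n. blinfun_apply f0 (x n) *\<^sub>R e) \<longlonglongrightarrow> 0"
      using tendsto_scaleR[OF _ tendsto_const, of _ 0 sequentially e] by simp
  qed
  show "compact_op (\<lambda>x. blinfun_apply f0 x *\<^sub>R e)"
    unfolding compact_op_def
  proof (intro conjI bl)
    define K where "K = (\<lambda>r. r *\<^sub>R e) ` {- norm f0 .. norm f0}"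
    have cK: "compact K" unfolding K_def
      by (intro compact_continuous_image continuous_intros compact_Icc)
    have sub: "(\<lambda>x. blinfun_apply f0 x *\<^sub>R e) ` ball 0 1 \<subseteq> K"
    proof
      fix v assume "v \<in> (\<lambda>x. blinfun_apply f0 x *\<^sub>R e) ` ball 0 1"
      then obtain u where u: "u \<in> ball 0 1" "v = blinfun_apply f0 u *\<^sub>R e" by blast
      have "\<bar>blinfun_apply f0 u\<bar> \<le> norm f0 * norm u" using norm_blinfun[of f0 u] by simp
      also have "\<dots> \<le> norm f0 * 1" using u(1) by (intro mult_left_mono) auto
      finally show "v \<in> K" unfolding K_def using u(2) by (intro image_eqI[of _ _ "blinfun_apply f0 u"]) (auto simp: abs_le_iff)
    qed
    have "closure ((\<lambda>x. blinfun_apply f0 x *\<^sub>R e) ` ball 0 1) \<subseteq> K"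
      by (rule closure_minimal[OF sub compact_imp_closed[OF cK]])
    then show "compact (closure ((\<lambda>x. blinfun_apply f0 x *\<^sub>R e) ` ball 0 1))"
      using compact_Int_closed[OF cK closed_closure[of "(\<lambda>x. blinfun_apply f0 x *\<^sub>R e) ` ball 0 1"]]
      by (simp add: Int_absorb1)
  qed
qed


theorem theorem3p1:
  shows "((\<forall>T :: 'e::banach_lattice \<Rightarrow> 'f::banach_lattice.
             positive_op T \<and> dunford_pettis_op T \<longrightarrow> uaw_dunford_pettis_op T)
          \<longleftrightarrow> (\<forall>T :: 'e \<Rightarrow> 'f. positive_op T \<and> compact_op T \<longrightarrow> uaw_dunford_pettis_op T))
       \<and> ((\<forall>T :: 'e \<Rightarrow> 'f. positive_op T \<and> compact_op T \<longrightarrow> uaw_dunford_pettis_op T)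
          \<longleftrightarrow> (dual_order_continuous TYPE('e) \<or> (\<forall>y :: 'f. y = 0)))"
proof -
  let ?A = "\<forall>T :: 'e \<Rightarrow> 'f. positive_op T \<and> dunford_pettis_op T \<longrightarrow> uaw_dunford_pettis_op T"
  let ?B = "\<forall>T :: 'e \<Rightarrow> 'f. positive_op T \<and> compact_op T \<longrightarrow> uaw_dunford_pettis_op T"
  let ?C = "dual_order_continuous TYPE('e) \<or> (\<forall>y :: 'f. y = 0)"
  have triv: "(\<lambda>n. T (x n)) \<longlonglongrightarrow> 0" if "\<forall>y :: 'f. y = 0" for T :: "'e \<Rightarrow> 'f" and x :: "nat \<Rightarrow> 'e"
  proof -
    have "(\<lambda>n. T (x n)) = (\<lambda>n. 0)" using that by auto
    then show ?thesis by simp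
  qed
  have CA: ?A if C: ?C
  proof (intro allI impI)
    fix T :: "'e \<Rightarrow> 'f" assume T: "positive_op T \<and> dunford_pettis_op T"
    have bl: "bounded_linear T" using T by (simp add: dunford_pettis_op_def)
    show "uaw_dunford_pettis_op T" unfolding uaw_dunford_pettis_op_def
    proof (intro conjI bl allI impI)
      fix x :: "nat \<Rightarrow> 'e" assume x: "bounded (range x) \<and> uaw_null x"
      show "(\<lambda>n. T (x n)) \<longlonglongrightarrow> 0"
      proof (cases "dual_order_continuous TYPE('e)")
        case True
        then have "weakly_null x" using x by (intro oc_uaw_weakly_null) auto
        then show ?thesis using T by (simp add: dunford_pettis_op_def)
      next
        case False
        then show ?thesis using C triv by blast
      qed
    qed
  qed
  have CB: ?B if C: ?C
  proof (intro allI impI)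
    fix T :: "'e \<Rightarrow> 'f" assume T: "positive_op T \<and> compact_op T"
    have bl: "bounded_linear T" using T by (simp add: compact_op_def)
    show "uaw_dunford_pettis_op T" unfolding uaw_dunford_pettis_op_def
    proof (intro conjI bl allI impI)
      fix x :: "nat \<Rightarrow> 'e" assume x: "bounded (range x) \<and> uaw_null x"
      show "(\<lambda>n. T (x n)) \<longlonglongrightarrow> 0"
      proof (cases "dual_order_continuous TYPE('e)")
        case True
        then have "weakly_null x" using x by (intro oc_uaw_weakly_null) auto
        then show ?thesis using T x compact_weakly_null by blast
      next
        case False
        then show ?thesis using C triv by blast
      qed
    qed
  qed
  have nC: "\<not> ?A \<and> \<not> ?B" if nC: "\<not> ?C"
  proof -
    have noc: "\<not> dual_order_continuous TYPE('e)" using nC by simp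
    obtain y0 :: 'f where y0: "y0 \<noteq> 0" using nC by blast
    define e where "e = labs y0"
    have e0: "0 \<le> e" by (simp add: e_def labs_nonneg)
    have ne: "norm e \<noteq> 0" using y0 by (simp add: e_def norm_labs)
    obtain f0 :: "'e \<Rightarrow>\<^sub>L real" and y :: "nat \<Rightarrow> 'e" where f0: "dual_le 0 f0"
      and by_: "bounded (range y)" and uy: "uaw_null y"
      and nt: "\<not> (\<lambda>k. blinfun_apply f0 (y k)) \<longlonglongrightarrow> 0"
      using not_oc_witness[OF noc] by blast
    define T where "T = (\<lambda>x. blinfun_apply f0 x *\<^sub>R e)"
    note R = rank_one_ops[OF f0 e0, folded T_def]
    have nu: "\<not> uaw_dunford_pettis_op T"
    proof
      assume "uaw_dunford_pettis_op T"
      then have "(\<lambda>k. T (y k)) \<longlonglongrightarrow> 0" using by_ uy by (simp add: uaw_dunford_pettis_op_def)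
      then have "(\<lambda>k. norm (T (y k)) / norm e) \<longlonglongrightarrow> 0" by (intro tendsto_divide_zero tendsto_norm_zero)
      moreover have "norm (T (y k)) / norm e = \<bar>blinfun_apply f0 (y k)\<bar>" for k using ne by (simp add: T_def)
      ultimately have "(\<lambda>k. \<bar>blinfun_apply f0 (y k)\<bar>) \<longlonglongrightarrow> 0" by simp
      then show False using nt by (simp add: tendsto_rabs_zero_iff)
    qed
    show ?thesis using R nu by blast
  qed
  show ?thesis
  proof (cases ?C)
    case True
    then show ?thesis using CA CB by blast
  next
    case False
    then show ?thesis using nC by blast
  qed
qed

end
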